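(* Let $y_C:\Delta_T\to[0,1]$ and a family $(\mu_t)_{t\in[0,T]}$ of probability measures on $W\times[0,1]$ satisfy all of the following: (1) $y_C((y_0,0),t)$ is non-decreasing in $y_0$, $y_C((0,t_0),t)$ is non-increasing in $t_0$, and $y_C(\gamma,t)$ is non-decreasing in $t$; (2) $y_C$ and $\partial y_C/\partial t$ are continuous on $\Delta_T$ and $y_C(\cdot,t):\Gamma_t\to[0,1]$ is surjective for each $t$; (3) for every measurable $h:W\to\mathbb{R}$ with $\sup_w|h(w)|\le1$ and all $(y,t),(y',t')\in[0,1]\times[0,T]$, $\bigl|\int_Wh(w)\mu_{t'}(dw\times[y',1))-\int_Wh(w)\mu_t(dw\times[y,1))\bigr|\le|y'-y|+M_We^{2C_WT}|t'-t|$; (4) $y_C((y_0,t_0),t_0)=y_0$ for $(y_0,t_0)\in\Gamma$; $\mu_0(dw\times dz)=\sigma(w,z)\lambda(dw)dz$; $\mu_t(dw\times[0,1))=\lambda(dw)$ for all $t$; $\mu_t(W\times[y,1))=1-y$ for all $(y,t)$; and for all $((y_0,t_0),t)\in\Delta_T$, as measures on $W$, $\mu_t(dw\times[y_C((y_0,t_0),t),1))=\mu_{t_0}(dw\times[y_0,1))-\int_{t_0}^t\int_{z\in[y_C((y_0,t_0),s),1)}w(z,s)\mu_s(dw\times dz)\,ds$. Then for every $\gamma=(y_0,t_0)\in\Gamma$ and $t\in[t_0,T]$, as measures on $W$, \[\mu_t(dw\times[y_C(\gamma,t),1))=e^{-\tilde\Omega_w(t_0,t)}\mu_{t_0}(dw\times[y_0,1))+\int_{t_0}^te^{-\tilde\Omega_w(s,t)}\int_{x\in[y_C(\gamma,s),1)}\frac{\partial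 w}{\partial y}(x,s)\,\mu_s(dw\times[y_C(\gamma,s),x))\,dx\,ds,\] where $\tilde\Omega_w(s,t)=\int_s^tw(1,u)\,du$.
   Context: Fix $T>0$. Let $W\subset C^1([0,1]\times[0,T];[0,\infty))$ be a set of non-negative $C^1$ functions $w(y,t)$, with Borel $\sigma$-algebra from the supremum norm $\|w\|=\sup_{(y,t)\in[0,1]\times[0,T]}|w(y,t)|$. Let $\lambda$ be a Borel probability measure on $W$ with $M_W:=\int_W\|w\|\lambda(dw)<\infty$ and $C_W:=\sup_{w\in W}\|\partial w/\partial y\|<\infty$, where $\partial w/\partial y$ denotes the derivative of $w$ in its first (spatial) variable. Let $\mu_0(dw\times dz)=\sigma(w,z)\lambda(dw)dz$ be a probability measure on $W\times[0,1]$ with $\int_W\sigma(w,y)\lambda(dw)=1$ for all $y\in[0,1]$ and $\int_0^1\sigma(w,z)dz=1$ for all $w$. Put $\Gamma_b=\{(0,s):0\le s\le T\}$, $\Gamma_i=\{(z,0):0\le z\le1\}$, $\Gamma=\Gamma_b\cup\Gamma_i$, $\Gamma_t=\Gamma_i\cup\{(0,s):0\le s\le t\}$ and $\Delta_T=\{(\gamma,t)\in\Gamma\times[0,T]:\gamma\in\Gamma_t\}$. *)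

theory Defs
  imports "HOL-Probability.Probability"
begin

text \<open>Elements w of W are functions w(y,t) on the rectangle [0,1] x [0,T], encoded as
  curried real functions  w y t  that vanish outside the rectangle (extensional encoding).\<close>

type_synonym fn = "real \<Rightarrow> real \<Rightarrow> real"

definition rect :: "real \<Rightarrow> (real \<times> real) set" where
  "rect T = {0..1} \<times> {0..T}"

definition C1_rect :: "real \<Rightarrow> fn \<Rightarrow> bool" where
  "C1_rect T w \<longleftrightarrow>
     (\<forall>y t. (y, t) \<notin> rect T \<longrightarrow> w y t = 0) \<and>
     (\<exists>D. (\<forall>p\<in>rect T. ((\<lambda>q. w (fst q) (snd q)) has_derivative D p) (at p within rect T)) \<and>
          continuous_on (rect T) (\<lambda>p. D p (1, 0)) \<and>
          continuous_on (rect T) (\<lambda>p. D p (0, 1)))"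

definition dwdy :: "fn \<Rightarrow> real \<Rightarrow> real \<Rightarrow> real" where
  "dwdy w x s = vector_derivative (\<lambda>y. w y s) (at x within {0..1})"

definition supnorm :: "real \<Rightarrow> fn \<Rightarrow> real" where
  "supnorm T w = (SUP p\<in>rect T. \<bar>w (fst p) (snd p)\<bar>)"

definition supdist :: "real \<Rightarrow> fn \<Rightarrow> fn \<Rightarrow> real" where
  "supdist T w v = (SUP p\<in>rect T. \<bar>w (fst p) (snd p) - v (fst p) (snd p)\<bar>)"

definition borel_sup :: "real \<Rightarrow> fn set \<Rightarrow> fn measure" where
  "borel_sup T W = sigma W {U. U \<subseteq> W \<and> (\<forall>w\<in>U. \<exists>e>0. \<forall>v\<in>W. supdist T w v < e \<longrightarrow> v \<in> U)}"

definition MW :: "real \<Rightarrow> fn measure \<Rightarrow> real" where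
  "MW T lam = (\<integral>w. supnorm T w \<partial>lam)"

definition CW_set :: "real \<Rightarrow> fn set \<Rightarrow> real set" where
  "CW_set T W = {\<bar>dwdy w x s\<bar> | w x s. w \<in> W \<and> x \<in> {0..1} \<and> s \<in> {0..T}}"

definition CW :: "real \<Rightarrow> fn set \<Rightarrow> real" where
  "CW T W = Sup (CW_set T W)"

definition I01 :: "real measure" where
  "I01 = restrict_space lborel {0..1}"

definition Gamma_b :: "real \<Rightarrow> (real \<times> real) set" where
  "Gamma_b T = {(0, s) | s. 0 \<le> s \<and> s \<le> T}"

definition Gamma_i :: "(real \<times> real) set" where
  "Gamma_i = {(z, 0) | z. 0 \<le> z \<and> z \<le> 1}"

definition Gamma :: "real \<Rightarrow> (real \<times> real) set" where
  "Gamma T = Gamma_b T \<union> Gamma_i"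

definition Gamma_t :: "real \<Rightarrow> (real \<times> real) set" where
  "Gamma_t t = Gamma_i \<union> {(0, s) | s. 0 \<le> s \<and> s \<le> t}"

definition Delta :: "real \<Rightarrow> ((real \<times> real) \<times> real) set" where
  "Delta T = {(\<gamma>, t). \<gamma> \<in> Gamma T \<and> t \<in> {0..T} \<and> \<gamma> \<in> Gamma_t t}"

definition Omega :: "fn \<Rightarrow> real \<Rightarrow> real \<Rightarrow> real" where
  "Omega w s t = (\<integral>u\<in>{s..t}. w 1 u \<partial>lborel)"

end

theory Submission
  imports Defs
begin


lemma compact_rect: "compact (rect T)"
  unfolding rect_def by (intro compact_Times compact_Icc)

lemma C1_zero: "C1_rect T w \<Longrightarrow> (y, t) \<notin> rect T \<Longrightarrow> w y t = 0"
  unfolding C1_rect_def by auto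

lemma C1_cont: "C1_rect T w \<Longrightarrow> continuous_on (rect T) (\<lambda>q. w (fst q) (snd q))"
  unfolding C1_rect_def by (auto intro: has_derivative_continuous_on)

lemma C1_bdd: assumes "C1_rect T w"
  shows "bdd_above ((\<lambda>p. \<bar>w (fst p) (snd p)\<bar>) ` rect T)"
proof -
  have "compact ((\<lambda>p. \<bar>w (fst p) (snd p)\<bar>) ` rect T)"
    by (intro compact_continuous_image continuous_intros C1_cont assms compact_rect)
  then show ?thesis by (auto intro: bounded_imp_bdd_above compact_imp_bounded)
qed

lemma rect_ne: "T \<ge> 0 \<Longrightarrow> rect T \<noteq> {}"
  unfolding rect_def by auto

lemma supnorm_ge: assumes "C1_rect T w" "T \<ge> 0"
  shows "\<bar>w y s\<bar> \<le> supnorm T w" "supnorm T w \<ge> 0"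
proof -
  have ex: "(0,0) \<in> rect T" using assms(2) unfolding rect_def by auto
  have le: "\<bar>w y s\<bar> \<le> supnorm T w" if "(y,s) \<in> rect T" for y s
    unfolding supnorm_def using that C1_bdd[OF assms(1)]
    by (metis (no_types, lifting) cSUP_upper fst_conv snd_conv)
  show "supnorm T w \<ge> 0" using le[OF ex] by linarith
  then show "\<bar>w y s\<bar> \<le> supnorm T w"
    using le C1_zero[OF assms(1)] by (cases "(y,s) \<in> rect T") auto
qed

lemma supdist_ge: assumes "C1_rect T w" "C1_rect T v" "T \<ge> 0"
  shows "\<bar>w y s - v y s\<bar> \<le> supdist T w v"
proof (cases "(y,s) \<in> rect T")
  case True
  have "compact ((\<lambda>p. \<bar>w (fst p) (snd p) - v (fst p) (snd p)\<bar>) ` rect T)"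
    by (intro compact_continuous_image continuous_intros C1_cont assms compact_rect)
  then have "bdd_above ((\<lambda>p. \<bar>w (fst p) (snd p) - v (fst p) (snd p)\<bar>) ` rect T)"
    by (auto intro: bounded_imp_bdd_above compact_imp_bounded)
  then show ?thesis unfolding supdist_def using True
    by (metis (no_types, lifting) cSUP_upper fst_conv snd_conv)
next
  case False
  have "rect T \<noteq> {}" using rect_ne assms(3) by auto
  then obtain p where p: "p \<in> rect T" by auto
  have "compact ((\<lambda>p. \<bar>w (fst p) (snd p) - v (fst p) (snd p)\<bar>) ` rect T)"
    by (intro compact_continuous_image continuous_intros C1_cont assms compact_rect)
  then have "bdd_above ((\<lambda>p. \<bar>w (fst p) (snd p) - v (fst p) (snd p)\<bar>) ` rect T)"
    by (auto intro: bounded_imp_bdd_above compact_imp_bounded)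
  then have "0 \<le> supdist T w v" unfolding supdist_def using p
    by (meson abs_ge_zero cSUP_upper2)
  then show ?thesis using False C1_zero[OF assms(1)] C1_zero[OF assms(2)] by simp
qed

lemma C1_dwdy:
  assumes w: "C1_rect T w" and xs: "(x, s) \<in> rect T"
  shows "((\<lambda>y. w y s) has_vector_derivative dwdy w x s) (at x within {0..1})"
    and "continuous_on (rect T) (\<lambda>q. dwdy w (fst q) (snd q))"
proof -
  from w obtain D where D: "\<forall>p\<in>rect T. ((\<lambda>q. w (fst q) (snd q)) has_derivative D p) (at p within rect T)"
    and Dc: "continuous_on (rect T) (\<lambda>p. D p (1, 0))" unfolding C1_rect_def by blast
  have key: "((\<lambda>y. w y s) has_vector_derivative D (x,s) (1,0)) (at x within {0..1})"
    if xs: "(x, s) \<in> rect T" for x s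
  proof -
    have lin: "linear (D (x,s))" using D xs has_derivative_linear by blast
    have g: "((\<lambda>y. (y, s)) has_derivative (\<lambda>h. (h, 0))) (at x within {0..1})"
      by (auto intro!: derivative_eq_intros)
    have sub: "(\<lambda>y. (y, s)) ` {0..1} \<subseteq> rect T" using xs unfolding rect_def by auto
    have f: "((\<lambda>q. w (fst q) (snd q)) has_derivative D (x,s)) (at ((\<lambda>y. (y, s)) x) within (\<lambda>y. (y, s)) ` {0..1})"
      using has_derivative_subset[OF _ sub] D xs by (metis (no_types, lifting))
    have "((\<lambda>q. w (fst q) (snd q)) \<circ> (\<lambda>y. (y, s)) has_derivative D (x,s) \<circ> (\<lambda>h. (h, 0))) (at x within {0..1})"
      by (rule diff_chain_within[OF g f])
    moreover have "(D (x,s) \<circ> (\<lambda>h. (h, 0))) = (\<lambda>h. h *\<^sub>R D (x,s) (1,0))"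
    proof
      fix h :: real
      have "(h, 0::real) = h *\<^sub>R (1, 0)" by simp
      then show "(D (x,s) \<circ> (\<lambda>h. (h, 0))) h = h *\<^sub>R D (x,s) (1,0)"
        using linear_scale[OF lin] by (metis comp_apply)
    qed
    ultimately show ?thesis unfolding has_vector_derivative_def comp_def by simp
  qed
  have eq: "dwdy w x s = D (x,s) (1,0)" if xs: "(x, s) \<in> rect T" for x s
  proof -
    have "x \<in> cbox 0 1" using xs unfolding rect_def by auto
    then show ?thesis unfolding dwdy_def using vector_derivative_within_cbox[of 0 1 x "\<lambda>y. w y s"] key[OF xs]
      by simp
  qed
  show "((\<lambda>y. w y s) has_vector_derivative dwdy w x s) (at x within {0..1})"
    using key[OF xs] eq[OF xs] by simp
  show "continuous_on (rect T) (\<lambda>q. dwdy w (fst q) (snd q))"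
    using Dc by (rule continuous_on_eq) (simp add: eq)
qed

lemma dwdy_bound:
  assumes "bdd_above (CW_set T W)" "w \<in> W" "x \<in> {0..1}" "s \<in> {0..T}"
  shows "\<bar>dwdy w x s\<bar> \<le> CW T W"
  unfolding CW_def using assms by (auto intro!: cSup_upper simp: CW_set_def)



locale base =
  fixes T :: real and W :: "fn set" and lam :: "fn measure" and mu :: "real \<Rightarrow> (fn \<times> real) measure"
  assumes T_pos: "T > 0"
    and W_C1: "\<forall>w\<in>W. C1_rect T w"
    and W_nonneg: "\<forall>w\<in>W. \<forall>y\<in>{0..1}. \<forall>t\<in>{0..T}. w y t \<ge> 0"
    and lam_space: "space lam = W"
    and lam_sets: "sets lam = sets (borel_sup T W)"
    and lam_prob: "prob_space lam"
    and MW_fin: "integrable lam (supnorm T)"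
    and CW_fin: "bdd_above (CW_set T W)"
    and mu_sets: "\<forall>t\<in>{0..T}. sets (mu t) = sets (lam \<Otimes>\<^sub>M I01)"
    and mu_prob: "\<forall>t\<in>{0..T}. prob_space (mu t)"
    and mu_marg: "\<forall>t\<in>{0..T}. \<forall>B\<in>sets lam. measure (mu t) (B \<times> {0..<1}) = measure lam B"
    and mu_tail: "\<forall>t\<in>{0..T}. \<forall>y\<in>{0..1}. measure (mu t) (W \<times> {y..<1}) = 1 - y"
    and lip: "\<forall>h. h \<in> borel_measurable lam \<and> (\<forall>w\<in>W. \<bar>h w\<bar> \<le> 1) \<longrightarrow>
               (\<forall>y\<in>{0..1}. \<forall>t\<in>{0..T}. \<forall>y'\<in>{0..1}. \<forall>t'\<in>{0..T}.
                  \<bar>(\<integral>p\<in>W \<times> {y'..<1}. h (fst p) \<partial>mu t') - (\<integral>p\<in>W \<times> {y..<1}. h (fst p) \<partial>mu t)\<bar>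
                    \<le> \<bar>y' - y\<bar> + MW T lam * exp (2 * CW T W * T) * \<bar>t' - t\<bar>)"
begin

lemma wC1: "w \<in> W \<Longrightarrow> C1_rect T w" using W_C1 by auto

lemma cont_meas:
  fixes g :: "fn \<Rightarrow> real"
  assumes "\<forall>w\<in>W. \<forall>e>0. \<exists>d>0. \<forall>v\<in>W. supdist T w v < d \<longrightarrow> \<bar>g v - g w\<bar> < e"
  shows "g \<in> borel_measurable lam"
proof (rule borel_measurableI)
  fix S :: "real set" assume S: "open S"
  let ?G = "{U. U \<subseteq> W \<and> (\<forall>w\<in>U. \<exists>e>0. \<forall>v\<in>W. supdist T w v < e \<longrightarrow> v \<in> U)}"
  have "g -` S \<inter> W \<in> ?G"
  proof safe
    fix w assume w: "w \<in> W" "g w \<in> S"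
    then obtain e where e: "e > 0" "\<forall>y. dist y (g w) < e \<longrightarrow> y \<in> S"
      using S unfolding open_dist by blast
    obtain d where "d > 0" "\<forall>v\<in>W. supdist T w v < d \<longrightarrow> \<bar>g v - g w\<bar> < e"
      using assms w e by blast
    then show "\<exists>e>0. \<forall>v\<in>W. supdist T w v < e \<longrightarrow> v \<in> g -` S \<inter> W"
      using e by (auto simp: dist_real_def)
  qed
  then have "g -` S \<inter> W \<in> sets (borel_sup T W)"
    unfolding borel_sup_def by (subst sets_measure_of) (auto intro: sigma_sets.Basic)
  then show "g -` S \<inter> space lam \<in> sets lam" using lam_sets lam_space by simp
qed

lemma eval_meas: "(\<lambda>w. w y s) \<in> borel_measurable lam"
proof (rule cont_meas, intro ballI allI impI)
  fix w :: fn and e :: real assume w: "w \<in> W" and e: "e > 0"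
  show "\<exists>d>0. \<forall>v\<in>W. supdist T w v < d \<longrightarrow> \<bar>v y s - w y s\<bar> < e"
  proof (intro exI[of _ e] conjI ballI impI e)
    fix v assume "v \<in> W" "supdist T w v < e"
    then show "\<bar>v y s - w y s\<bar> < e"
      using supdist_ge[OF wC1[OF w] wC1[of v], of y s] T_pos by (simp add: abs_minus_commute)
  qed
qed


lemma w_cont_u: assumes "w \<in> W" "y \<in> {0..1}" shows "continuous_on {0..T} (\<lambda>u. w y u)"
proof -
  have "continuous_on {0..T} (\<lambda>u. (\<lambda>q. w (fst q) (snd q)) (y, u))"
    by (rule continuous_on_compose2[OF C1_cont[OF wC1[OF assms(1)]]])
       (use assms in \<open>auto intro!: continuous_intros simp: rect_def\<close>)
  then show ?thesis by simp
qed

lemma w_cont_y: assumes "w \<in> W" "s \<in> {0..T}" shows "continuous_on {0..1} (\<lambda>y. w y s)"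
proof -
  have "continuous_on {0..1} (\<lambda>y. (\<lambda>q. w (fst q) (snd q)) (y, s))"
    by (rule continuous_on_compose2[OF C1_cont[OF wC1[OF assms(1)]]])
       (use assms in \<open>auto intro!: continuous_intros simp: rect_def\<close>)
  then show ?thesis by simp
qed

lemma Omega_HK: assumes "w \<in> W" "0 \<le> s" "t \<le> T"
  shows "Omega w s t = integral {s..t} (\<lambda>u. w 1 u)"
    and "set_integrable lborel {s..t} (\<lambda>u. w 1 u)"
proof -
  have c: "continuous_on {s..t} (\<lambda>u. w 1 u)"
    by (rule continuous_on_subset[OF w_cont_u[OF assms(1)]]) (use assms in auto)
  show si: "set_integrable lborel {s..t} (\<lambda>u. w 1 u)"
    unfolding set_integrable_def by (rule borel_integrable_compact[OF compact_Icc c])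
  show "Omega w s t = integral {s..t} (\<lambda>u. w 1 u)"
    unfolding Omega_def by (rule set_borel_integral_eq_integral(2)[OF si])
qed

lemma Omega_meas: assumes "0 \<le> s" "t \<le> T"
  shows "(\<lambda>w. Omega w s t) \<in> borel_measurable lam"
proof (rule cont_meas, intro ballI allI impI)
  fix w :: fn and e :: real assume w: "w \<in> W" and e: "e > 0"
  show "\<exists>d>0. \<forall>v\<in>W. supdist T w v < d \<longrightarrow> \<bar>Omega v s t - Omega w s t\<bar> < e"
  proof (intro exI[of _ "e / (T + 1)"] conjI ballI impI)
    show "e / (T + 1) > 0" using e T_pos by simp
    fix v assume v: "v \<in> W" and d: "supdist T w v < e / (T + 1)"
    have "Omega v s t - Omega w s t = integral {s..t} (\<lambda>u. v 1 u - w 1 u)"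
      using Omega_HK[OF v assms] Omega_HK[OF w assms]
      by (simp add: integral_diff set_borel_integral_eq_integral(1))
    moreover have "norm (integral {s..t} (\<lambda>u. v 1 u - w 1 u)) \<le> supdist T w v * Henstock_Kurzweil_Integration.content (cbox s t)"
    proof (rule has_integral_bound)
      show "0 \<le> supdist T w v"
        using supdist_ge[OF wC1[OF w] wC1[OF v], of 0 0] T_pos by linarith
      show "((\<lambda>u. v 1 u - w 1 u) has_integral integral {s..t} (\<lambda>u. v 1 u - w 1 u)) (cbox s t)"
        using Omega_HK[OF v assms] Omega_HK[OF w assms]
        by (simp add: integrable_diff set_borel_integral_eq_integral(1) integrable_integral)
      show "norm (v 1 x - w 1 x) \<le> supdist T w v" if "x \<in> cbox s t" for x
        using supdist_ge[OF wC1[OF w] wC1[OF v]] T_pos by (auto simp: abs_minus_commute)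
    qed
    moreover have "Henstock_Kurzweil_Integration.content (cbox s t) \<le> T"
      using assms T_pos by (cases "s \<le> t") auto
    moreover have "supdist T w v * T < e"
    proof -
      have "supdist T w v * T \<le> supdist T w v * (T + 1)"
        using supdist_ge[OF wC1[OF w] wC1[OF v], of 0 0] T_pos by (intro mult_left_mono) auto
      also have "\<dots> < e" using d T_pos by (simp add: field_simps)
      finally show ?thesis .
    qed
    moreover have "0 \<le> supdist T w v"
        using supdist_ge[OF wC1[OF w] wC1[OF v], of 0 0] T_pos by linarith
    ultimately show "\<bar>Omega v s t - Omega w s t\<bar> < e"
      by (smt (verit, best) mult_left_mono real_norm_def)
  qed
qed


definition yseq :: "real \<Rightarrow> nat \<Rightarrow> real" where
  "yseq x i = x + (1 - x) * inverse (real (Suc i))"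

lemma yseq_lim: "yseq x \<longlonglongrightarrow> x"
proof -
  have "(\<lambda>i. x + (1 - x) * inverse (real (Suc i))) \<longlonglongrightarrow> x + (1 - x) * 0"
    by (intro tendsto_intros LIMSEQ_inverse_real_of_nat)
  then show ?thesis unfolding yseq_def by simp
qed

lemma yseq_in: assumes "0 \<le> x" "x < 1" shows "yseq x i \<in> {0..1} - {x}"
proof -
  define q where "q = (1 - x) * inverse (real (Suc i))"
  have a: "0 < inverse (real (Suc i))" "inverse (real (Suc i)) \<le> 1" by (auto simp: inverse_le_1_iff)
  have b: "0 < q" using a assms unfolding q_def by simp
  have c: "q \<le> 1 - x" using mult_left_mono[of "inverse(real(Suc i))" 1 "1-x"] a assms unfolding q_def by simp
  have "x + q \<ge> 0" "x + q \<le> 1" using b c assms by linarith+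
  moreover have "x + q \<noteq> x" using b by simp
  ultimately show ?thesis unfolding yseq_def q_def[symmetric] by auto
qed

lemma dq_lim: assumes w: "w \<in> W" and x: "0 \<le> x" "x < 1" and s: "s \<in> {0..T}"
  shows "(\<lambda>i. (w (yseq x i) s - w x s) / (yseq x i - x)) \<longlonglongrightarrow> dwdy w x s"
proof -
  have "(x, s) \<in> rect T" using x s unfolding rect_def by auto
  then have "((\<lambda>y. w y s) has_field_derivative dwdy w x s) (at x within {0..1})"
    using C1_dwdy(1)[OF wC1[OF w]] by (simp add: has_real_derivative_iff_has_vector_derivative)
  then have "((\<lambda>z. (w z s - w x s) / (z - x)) \<longlongrightarrow> dwdy w x s) (at x within {0..1})"
    by (simp add: has_field_derivative_iff)
  then show ?thesis
    using yseq_in[OF x] yseq_lim unfolding tendsto_at_iff_sequentially comp_def by blast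
qed

lemma dwdy_meas: assumes "0 \<le> x" "x < 1" "s \<in> {0..T}"
  shows "(\<lambda>w. dwdy w x s) \<in> borel_measurable lam"
proof (rule borel_measurable_LIMSEQ_real)
  show "(\<lambda>w. (w (yseq x i) s - w x s) / (yseq x i - x)) \<in> borel_measurable lam" for i
    by (intro borel_measurable_divide borel_measurable_diff eval_meas borel_measurable_const)
  show "(\<lambda>i. (w (yseq x i) s - w x s) / (yseq x i - x)) \<longlonglongrightarrow> dwdy w x s" if "w \<in> space lam" for w
    using dq_lim[OF _ assms] that lam_space by simp
qed

lemma joint_meas: "(\<lambda>p. fst p (snd p) s) \<in> borel_measurable (lam \<Otimes>\<^sub>M (lborel :: real measure))"
proof (cases "s \<in> {0..T}")
  case False
  have "(\<lambda>p. 0::real) \<in> borel_measurable (lam \<Otimes>\<^sub>M (lborel :: real measure))" by simp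
  then show ?thesis
  proof (rule measurable_cong[THEN iffD1, rotated])
    fix p assume "p \<in> space (lam \<Otimes>\<^sub>M (lborel :: real measure))"
    then have "fst p \<in> W" using lam_space by (auto simp: space_pair_measure)
    then show "0 = fst p (snd p) s" using C1_zero[OF wC1] False unfolding rect_def by auto
  qed
next
  case True
  define z where "z n y = real_of_int \<lfloor>real (Suc n) * y\<rfloor> / real (Suc n)" for n y
  show ?thesis
  proof (rule borel_measurable_LIMSEQ_real)
    fix n
    have A: "(\<lambda>p. fst p (real_of_int k / real (Suc n)) s) \<in> borel_measurable (lam \<Otimes>\<^sub>M (lborel :: real measure))" for k
      by (rule measurable_compose[OF measurable_fst eval_meas])
    have B: "(\<lambda>p. \<lfloor>real (Suc n) * snd p\<rfloor>) \<in> measurable (lam \<Otimes>\<^sub>M (lborel :: real measure)) (count_space UNIV)"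
      by (rule measurable_compose[OF _ measurable_real_floor]) measurable
    have "(\<lambda>p. fst p (real_of_int \<lfloor>real (Suc n) * snd p\<rfloor> / real (Suc n)) s) \<in> borel_measurable (lam \<Otimes>\<^sub>M (lborel :: real measure))"
      using measurable_compose_countable[where f="\<lambda>k p. fst p (real_of_int k / real (Suc n)) s"
          and g="\<lambda>p. \<lfloor>real (Suc n) * snd p\<rfloor>", OF A B] by simp
    then show "(\<lambda>p. fst p (z n (snd p)) s) \<in> borel_measurable (lam \<Otimes>\<^sub>M (lborel :: real measure))"
      unfolding z_def by simp
  next
    fix p assume p: "p \<in> space (lam \<Otimes>\<^sub>M (lborel :: real measure))"
    obtain w y where pw: "p = (w, y)" by (cases p)
    have w: "w \<in> W" using p pw lam_space by (auto simp: space_pair_measure)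
    have zle: "z n y \<le> y" for n
    proof -
      have "real_of_int \<lfloor>real (Suc n) * y\<rfloor> \<le> real (Suc n) * y" by simp
      then show ?thesis unfolding z_def by (simp add: divide_le_eq mult.commute)
    qed
    have zgt: "y - inverse (real (Suc n)) < z n y" for n
    proof -
      have "real (Suc n) * y < real_of_int \<lfloor>real (Suc n) * y\<rfloor> + 1" by linarith
      then have "real (Suc n) * y - 1 < real_of_int \<lfloor>real (Suc n) * y\<rfloor>" by simp
      then have "(real (Suc n) * y - 1) / real (Suc n) < z n y" unfolding z_def
        by (intro divide_strict_right_mono) auto
      then show ?thesis by (simp add: field_simps)
    qed
    have zlim: "(\<lambda>n. z n y) \<longlonglongrightarrow> y"
    proof (rule tendsto_sandwich[of "\<lambda>n. y - inverse (real (Suc n))" _ _ "\<lambda>n. y"])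
      show "\<forall>\<^sub>F n in sequentially. y - inverse (real (Suc n)) \<le> z n y"
        using zgt by (intro always_eventually allI less_imp_le) auto
      show "\<forall>\<^sub>F n in sequentially. z n y \<le> y" using zle by auto
      have "(\<lambda>n. y - inverse (real (Suc n))) \<longlonglongrightarrow> y - 0"
        by (intro tendsto_intros LIMSEQ_inverse_real_of_nat)
      then show "(\<lambda>n. y - inverse (real (Suc n))) \<longlonglongrightarrow> y" by simp
    qed simp
    have "(\<lambda>n. w (z n y) s) \<longlonglongrightarrow> w y s"
    proof (cases "y < 0")
      case True
      then have "w (z n y) s = 0" "w y s = 0" for n
        using zle[of n] C1_zero[OF wC1[OF w]] unfolding rect_def by auto
      then show ?thesis by simp
    next
      case n0: False
      show ?thesis
      proof (cases "y \<le> 1")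
        case True
        have z01: "z n y \<in> {0..1}" for n
        proof -
          have "0 \<le> real_of_int \<lfloor>real (Suc n) * y\<rfloor>" using n0 by simp
          then have "0 \<le> z n y" unfolding z_def by simp
          then show ?thesis using zle[of n] True by auto
        qed
        show ?thesis
          by (rule continuous_on_tendsto_compose[OF w_cont_y[OF w \<open>s \<in> {0..T}\<close>] zlim])
             (use n0 True z01 in auto)
      next
        case False
        have "\<forall>\<^sub>F n in sequentially. inverse (real (Suc n)) < y - 1"
          using LIMSEQ_inverse_real_of_nat False by (auto simp: order_tendsto_iff)
        then have ev: "\<forall>\<^sub>F n in sequentially. w (z n y) s = w y s"
        proof eventually_elim
          case (elim n)
          then have "z n y > 1" using zgt[of n] by linarith
          then show ?case using C1_zero[OF wC1[OF w]] False unfolding rect_def by auto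
        qed
        show ?thesis by (rule tendsto_eventually[OF ev])
      qed
    qed
    then show "(\<lambda>n. fst p (z n (snd p)) s) \<longlonglongrightarrow> fst p (snd p) s" using pw by simp
  qed
qed

lemma joint_comp:
  assumes "f \<in> measurable M lam" "g \<in> borel_measurable M"
  shows "(\<lambda>x. f x (g x) s) \<in> borel_measurable M"
proof -
  have "(\<lambda>x. (f x, g x)) \<in> measurable M (lam \<Otimes>\<^sub>M (lborel :: real measure))"
    using assms by (intro measurable_Pair) (auto simp: measurable_lborel2)
  from measurable_compose[OF this joint_meas] show ?thesis by simp
qed

lemma joint_dwdy_comp:
  assumes f: "f \<in> measurable M lam" and g: "g \<in> borel_measurable M" and s: "s \<in> {0..T}"
  shows "(\<lambda>x. indicator {0..<1} (g x) * dwdy (f x) (g x) s) \<in> borel_measurable M"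
proof (rule borel_measurable_LIMSEQ_real)
  show "(\<lambda>x. indicator {0..<1} (g x) * ((f x (yseq (g x) i) s - f x (g x) s) / (yseq (g x) i - g x)))
      \<in> borel_measurable M" for i
  proof -
    have g': "(\<lambda>x. yseq (g x) i) \<in> borel_measurable M"
      unfolding yseq_def using g by measurable
    have "(\<lambda>x. f x (yseq (g x) i) s) \<in> borel_measurable M" by (rule joint_comp[OF f g'])
    moreover have "(\<lambda>x. f x (g x) s) \<in> borel_measurable M" by (rule joint_comp[OF f g])
    ultimately show ?thesis using g g' by measurable
  qed
  show "(\<lambda>i. indicator {0..<1} (g x) * ((f x (yseq (g x) i) s - f x (g x) s) / (yseq (g x) i - g x)))
      \<longlonglongrightarrow> indicator {0..<1} (g x) * dwdy (f x) (g x) s" if x: "x \<in> space M" for x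
  proof (cases "g x \<in> {0..<1}")
    case True
    have "f x \<in> W" using measurable_space[OF f x] lam_space by simp
    then show ?thesis using True by (intro tendsto_intros dq_lim s) auto
  qed simp
qed

end


context base begin

lemma I01_space: "space I01 = {0..1}"
  unfolding I01_def by (simp add: space_restrict_space)

lemma I01_sets: "S \<in> sets borel \<Longrightarrow> S \<subseteq> {0..1} \<Longrightarrow> S \<in> sets I01"
  unfolding I01_def by (subst sets_restrict_space_iff) auto

lemma P_space: "space (lam \<Otimes>\<^sub>M I01) = W \<times> {0..1}"
  by (simp add: space_pair_measure lam_space I01_space)

lemma mu_space: "s \<in> {0..T} \<Longrightarrow> space (mu s) = W \<times> {0..1}"
  using sets_eq_imp_space_eq[of "mu s" "lam \<Otimes>\<^sub>M I01"] mu_sets P_space by auto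

lemma mu_meas: "s \<in> {0..T} \<Longrightarrow> measurable (mu s) N = measurable (lam \<Otimes>\<^sub>M I01) N"
  using mu_sets by (intro measurable_cong_sets) auto

lemma BS_sets: "B \<in> sets lam \<Longrightarrow> S \<in> sets borel \<Longrightarrow> S \<subseteq> {0..1} \<Longrightarrow> B \<times> S \<in> sets (lam \<Otimes>\<^sub>M I01)"
  by (intro pair_measureI I01_sets) auto

lemma W_sets: "W \<in> sets lam" using lam_space sets.top by metis

lemma mu_sets': "s \<in> {0..T} \<Longrightarrow> sets (mu s) = sets (lam \<Otimes>\<^sub>M I01)" using mu_sets by auto

lemma BS_mu: "s \<in> {0..T} \<Longrightarrow> B \<in> sets lam \<Longrightarrow> S \<in> sets borel \<Longrightarrow> S \<subseteq> {0..1} \<Longrightarrow> B \<times> S \<in> sets (mu s)"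
  using BS_sets mu_sets' by auto

lemma BI_mu: assumes "s \<in> {0..T}" "B \<in> sets lam" "0 \<le> a" "b \<le> 1"
  shows "B \<times> {a..<b} \<in> sets (mu s)" "B \<times> {a..b} \<in> sets (mu s)"
proof -
  have "{a..<b} \<subseteq> {0..1}" "{a..b} \<subseteq> {0..1}" using assms by auto
  then show "B \<times> {a..<b} \<in> sets (mu s)" "B \<times> {a..b} \<in> sets (mu s)" using BS_mu assms by auto
qed

lemma mu_fst_distr: assumes s: "s \<in> {0..T}" shows "distr (mu s) lam fst = lam"
proof (rule measure_eqI)
  interpret M: prob_space "mu s" using mu_prob s by simp
  interpret L: prob_space lam using lam_prob by simp
  show "sets (distr (mu s) lam fst) = sets lam" by simp
  have fm: "fst \<in> measurable (mu s) lam" by (subst mu_meas[OF s]) simp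
  have W1: "W \<times> {1} \<in> sets (mu s)" using mu_sets'[OF s] BS_sets[OF W_sets, of "{1}"] by simp
  have sub: "{0..<1::real} \<subseteq> {0..1}" by auto
  have W0: "W \<times> {0..<1} \<in> sets (mu s)" using mu_sets'[OF s] BS_sets[OF W_sets _ sub] by simp
  have "measure (mu s) (W \<times> {0..1}) = 1" using M.prob_space mu_space[OF s] by simp
  moreover have "W \<times> {0..1::real} = W \<times> {0..<1} \<union> W \<times> {1}" by auto
  moreover have "measure (mu s) (W \<times> {0..<1}) = 1" using mu_tail s by auto
  moreover have "W \<times> {0..<1} \<inter> W \<times> {1::real} = {}" by auto
  ultimately have m1: "measure (mu s) (W \<times> {1}) = 0"
    using M.finite_measure_Union[OF W0 W1] by auto
  fix A assume "A \<in> sets (distr (mu s) lam fst)"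
  then have A: "A \<in> sets lam" by simp
  then have AW: "A \<subseteq> W" using sets.sets_into_space lam_space by auto
  have "fst -` A \<inter> space (mu s) = A \<times> {0..1}" using mu_space[OF s] AW by auto
  then have "emeasure (distr (mu s) lam fst) A = emeasure (mu s) (A \<times> {0..1})"
    using emeasure_distr[OF fm A] by simp
  also have "\<dots> = ennreal (measure (mu s) (A \<times> {0..1}))" by (simp add: M.emeasure_eq_measure)
  also have "measure (mu s) (A \<times> {0..1}) = measure (mu s) (A \<times> {0..<1}) + measure (mu s) (A \<times> {1})"
  proof -
    have "A \<times> {0..1::real} = A \<times> {0..<1} \<union> A \<times> {1}" by auto
    moreover have "A \<times> {0..<1} \<in> sets (mu s)" "A \<times> {1} \<in> sets (mu s)"
      using BI_mu[OF s A, of 0 1] BI_mu[OF s A, of 1 1] by auto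
    moreover have "A \<times> {0..<1} \<inter> A \<times> {1::real} = {}" by auto
    ultimately show ?thesis using M.finite_measure_Union by auto
  qed
  also have "measure (mu s) (A \<times> {1}) = 0"
  proof -
    have "measure (mu s) (A \<times> {1}) \<le> measure (mu s) (W \<times> {1})"
      using AW W1 by (intro M.finite_measure_mono) auto
    then show ?thesis using m1 by (simp add: measure_nonneg antisym)
  qed
  also have "measure (mu s) (A \<times> {0..<1}) = measure lam A" using mu_marg s A by auto
  finally show "emeasure (distr (mu s) lam fst) A = emeasure lam A" by (simp add: L.emeasure_eq_measure)
qed

lemma marg_integral:
  fixes G :: "fn \<Rightarrow> real"
  assumes s: "s \<in> {0..T}" and G: "integrable lam G"
  shows "integrable (mu s) (\<lambda>p. G (fst p))" "(\<integral>p. G (fst p) \<partial>mu s) = (\<integral>w. G w \<partial>lam)"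
proof -
  have fm: "fst \<in> measurable (mu s) lam" by (subst mu_meas[OF s]) simp
  have Gm: "G \<in> borel_measurable lam" using G by auto
  show "integrable (mu s) (\<lambda>p. G (fst p))"
    using integrable_distr_eq[OF fm Gm] mu_fst_distr[OF s] G by simp
  show "(\<integral>p. G (fst p) \<partial>mu s) = (\<integral>w. G w \<partial>lam)"
    using integral_distr[OF fm Gm] mu_fst_distr[OF s] by simp
qed

lemma mu_int:
  fixes g :: "fn \<times> real \<Rightarrow> real" and G :: "fn \<Rightarrow> real"
  assumes s: "s \<in> {0..T}" and g: "g \<in> borel_measurable (lam \<Otimes>\<^sub>M I01)" and G: "integrable lam G"
    and b: "\<And>w z. w \<in> W \<Longrightarrow> z \<in> {0..1} \<Longrightarrow> \<bar>g (w, z)\<bar> \<le> G w"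
  shows "integrable (mu s) g" "\<bar>\<integral>p. g p \<partial>mu s\<bar> \<le> (\<integral>w. G w \<partial>lam)"
    "(\<integral>p. \<bar>g p\<bar> \<partial>mu s) \<le> (\<integral>w. G w \<partial>lam)"
proof -
  have gm: "g \<in> borel_measurable (mu s)" using g by (subst mu_meas[OF s])
  have bb: "norm (g p) \<le> G (fst p)" if "p \<in> space (mu s)" for p
    using b that mu_space[OF s] by (cases p) auto
  show ig: "integrable (mu s) g"
  proof (rule Bochner_Integration.integrable_bound[OF marg_integral(1)[OF s G] gm])
    show "AE x in mu s. norm (g x) \<le> norm (G (fst x))"
    proof (rule AE_I2)
      fix x assume x: "x \<in> space (mu s)"
      show "norm (g x) \<le> norm (G (fst x))" using bb[OF x] abs_ge_self[of "G (fst x)"] by simp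
    qed
  qed
  have "(\<integral>p. \<bar>g p\<bar> \<partial>mu s) \<le> (\<integral>p. G (fst p) \<partial>mu s)"
    using bb by (intro integral_mono ig[THEN integrable_abs] marg_integral(1)[OF s G]) auto
  then show "(\<integral>p. \<bar>g p\<bar> \<partial>mu s) \<le> (\<integral>w. G w \<partial>lam)" using marg_integral(2)[OF s G] by simp
  then show "\<bar>\<integral>p. g p \<partial>mu s\<bar> \<le> (\<integral>w. G w \<partial>lam)"
    by (rule order_trans[OF integral_abs_bound])
qed

end


context base begin

definition Nf :: "real \<Rightarrow> real \<Rightarrow> (fn \<Rightarrow> real) \<Rightarrow> real" where
  "Nf t y h = (\<integral>p\<in>W \<times> {y..<1}. h (fst p) \<partial>mu t)"

definition Lc :: real where "Lc = MW T lam * exp (2 * CW T W * T)"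

lemma W_ne: "W \<noteq> {}"
  using prob_space.not_empty[OF lam_prob] lam_space by simp

lemma Nf_raw: "Nf t y h = (\<integral>p. indicator (W \<times> {y..<1}) p * h (fst p) \<partial>mu t)"
  by (simp add: Nf_def set_lebesgue_integral_def)

lemma ind_meas: assumes "0 \<le> a" "b \<le> 1" "B \<in> sets lam"
  shows "(\<lambda>p. indicator (B \<times> {a..<b}) p :: real) \<in> borel_measurable (lam \<Otimes>\<^sub>M I01)"
proof -
  have "{a..<b} \<subseteq> {0..1}" using assms by auto
  then show ?thesis using BS_sets[OF assms(3)] by (intro borel_measurable_indicator) auto
qed

lemma fst_meas: "h \<in> borel_measurable lam \<Longrightarrow> (\<lambda>p. h (fst p)) \<in> borel_measurable (lam \<Otimes>\<^sub>M I01)"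
  by (rule measurable_compose[OF measurable_fst])

lemma Nf_int:
  assumes t: "t \<in> {0..T}" and y: "0 \<le> y" and h: "h \<in> borel_measurable lam" and G: "integrable lam G"
    and b: "\<And>w. w \<in> W \<Longrightarrow> \<bar>h w\<bar> \<le> G w"
  shows "integrable (mu t) (\<lambda>p. indicator (W \<times> {y..<1}) p * h (fst p))" "\<bar>Nf t y h\<bar> \<le> (\<integral>w. G w \<partial>lam)"
proof -
  have m: "(\<lambda>p. indicator (W \<times> {y..<1}) p * h (fst p)) \<in> borel_measurable (lam \<Otimes>\<^sub>M I01)"
    using ind_meas[OF y order_refl W_sets] fst_meas[OF h] by (rule borel_measurable_times)
  have bb: "\<bar>indicator (W \<times> {y..<1}) (w, z) * h (fst (w, z))\<bar> \<le> G w" if "w \<in> W" for w z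
    using b[OF that] by (auto simp: indicator_def)
  show "integrable (mu t) (\<lambda>p. indicator (W \<times> {y..<1}) p * h (fst p))"
    by (rule mu_int(1)[OF t m G bb])
  show "\<bar>Nf t y h\<bar> \<le> (\<integral>w. G w \<partial>lam)" unfolding Nf_raw
    by (rule mu_int(2)[OF t m G bb])
qed

lemma Nf_bdd_int:
  assumes t: "t \<in> {0..T}" and y: "0 \<le> y" and h: "h \<in> borel_measurable lam"
    and b: "\<And>w. w \<in> W \<Longrightarrow> \<bar>h w\<bar> \<le> M"
  shows "integrable (mu t) (\<lambda>p. indicator (W \<times> {y..<1}) p * h (fst p))" "\<bar>Nf t y h\<bar> \<le> M"
proof -
  interpret L: prob_space lam by (rule lam_prob)
  have G: "integrable lam (\<lambda>w. M)" by simp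
  show "integrable (mu t) (\<lambda>p. indicator (W \<times> {y..<1}) p * h (fst p))" by (rule Nf_int(1)[OF t y h G b])
  show "\<bar>Nf t y h\<bar> \<le> M" using Nf_int(2)[OF t y h G b] prob_space.prob_space[OF lam_prob] by simp
qed

lemma Nf_add:
  assumes "integrable (mu t) (\<lambda>p. indicator (W \<times> {y..<1}) p * h (fst p))"
    "integrable (mu t) (\<lambda>p. indicator (W \<times> {y..<1}) p * g (fst p))"
  shows "Nf t y (\<lambda>w. h w + g w) = Nf t y h + Nf t y g"
    "Nf t y (\<lambda>w. h w - g w) = Nf t y h - Nf t y g"
  unfolding Nf_raw using assms by (simp_all add: distrib_left right_diff_distrib)

lemma Nf_cmult: "Nf t y (\<lambda>w. c * h w) = c * Nf t y h"
  unfolding Nf_raw by (simp add: mult.left_commute)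

lemma Lip_scaled:
  assumes h: "h \<in> borel_measurable lam" and b: "\<And>w. w \<in> W \<Longrightarrow> \<bar>h w\<bar> \<le> M"
    and t: "t \<in> {0..T}" "t' \<in> {0..T}" and y: "y \<in> {0..1}" "y' \<in> {0..1}"
  shows "\<bar>Nf t' y' h - Nf t y h\<bar> \<le> M * (\<bar>y' - y\<bar> + Lc * \<bar>t' - t\<bar>)"
proof -
  obtain w0 where "w0 \<in> W" using W_ne by auto
  then have M0: "M \<ge> 0" using b[of w0] by linarith
  show ?thesis
  proof (cases "M = 0")
    case True
    then have "\<And>w. w \<in> W \<Longrightarrow> h w = 0" using b by fastforce
    then have "Nf t y h = 0" for t y unfolding Nf_raw
      by (intro integral_eq_zero_AE AE_I2) (auto simp: indicator_def)
    then show ?thesis using True by simp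
  next
    case False
    then have Mp: "M > 0" using M0 by simp
    let ?h = "\<lambda>w. h w / M"
    have hm: "?h \<in> borel_measurable lam" using h by simp
    have hb: "\<forall>w\<in>W. \<bar>?h w\<bar> \<le> 1"
    proof
      fix w assume "w \<in> W"
      then have hw: "\<bar>h w\<bar> \<le> M" by (rule b)
      have "\<bar>?h w\<bar> = \<bar>h w\<bar> / M" using Mp by simp
      also have "\<dots> \<le> 1" using Mp hw by (simp add: divide_le_eq)
      finally show "\<bar>?h w\<bar> \<le> 1" .
    qed
    have "\<bar>Nf t' y' ?h - Nf t y ?h\<bar> \<le> \<bar>y' - y\<bar> + Lc * \<bar>t' - t\<bar>"
      using lip[rule_format, OF conjI[OF hm hb] y(1) t(1) y(2) t(2)] unfolding Nf_def Lc_def .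
    moreover have "Nf s z h = M * Nf s z ?h" for s z
      using Nf_cmult[of s z M ?h] Mp by simp
    ultimately show ?thesis using Mp
      by (simp add: right_diff_distrib[symmetric] abs_mult mult_left_mono)
  qed
qed


lemma intb: fixes f G :: "fn \<Rightarrow> real" assumes "integrable lam G" "f \<in> borel_measurable lam" "\<And>w. w \<in> W \<Longrightarrow> \<bar>f w\<bar> \<le> G w"
  shows "integrable lam f"
proof (rule Bochner_Integration.integrable_bound[OF assms(1,2)])
  show "AE x in lam. norm (f x) \<le> norm (G x)"
  proof (rule AE_I2)
    fix x assume "x \<in> space lam"
    then show "norm (f x) \<le> norm (G x)" using assms(3)[of x] lam_space abs_ge_self[of "G x"] by simp
  qed
qed

lemma TE:
  assumes h: "h \<in> borel_measurable lam" and G: "integrable lam G" and b: "\<And>w. w \<in> W \<Longrightarrow> \<bar>h w\<bar> \<le> G w"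
    and M: "M \<ge> 0" and t: "t \<in> {0..T}" "t' \<in> {0..T}" and y: "y \<in> {0..1}" "y' \<in> {0..1}"
  shows "\<bar>Nf t' y' h - Nf t y h\<bar> \<le> 2 * (\<integral>w. max 0 (G w - M) \<partial>lam) + M * (\<bar>y' - y\<bar> + Lc * \<bar>t' - t\<bar>)"
proof -
  define hM where "hM w = max (-M) (min M (h w))" for w
  define r where "r w = h w - hM w" for w
  have hMm: "hM \<in> borel_measurable lam" unfolding hM_def using h by measurable
  have rm: "r \<in> borel_measurable lam" unfolding r_def using h hMm by measurable
  have hMb: "\<bar>hM w\<bar> \<le> M" for w unfolding hM_def using M by auto
  have rb: "\<bar>r w\<bar> \<le> max 0 (G w - M)" if "w \<in> W" for w
    using b[OF that] M unfolding r_def hM_def by (auto simp: max_def min_def abs_if split: if_splits)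
  have E: "integrable lam (\<lambda>w. max 0 (G w - M))"
  proof -
    interpret L: prob_space lam by (rule lam_prob)
    show ?thesis using G by (intro integrable_max) auto
  qed
  have dec: "Nf s z h = Nf s z hM + Nf s z r" if "s \<in> {0..T}" "z \<in> {0..1}" for s z
  proof -
    have "Nf s z (\<lambda>w. hM w + r w) = Nf s z hM + Nf s z r"
      using that by (intro Nf_add(1) Nf_bdd_int(1)[OF _ _ hMm hMb] Nf_int(1)[OF _ _ rm E rb]) auto
    moreover have "(\<lambda>w. hM w + r w) = h" unfolding r_def by auto
    ultimately show ?thesis by simp
  qed
  have rB: "\<bar>Nf s z r\<bar> \<le> (\<integral>w. max 0 (G w - M) \<partial>lam)" if "s \<in> {0..T}" "z \<in> {0..1}" for s z
    using that by (intro Nf_int(2)[OF _ _ rm E rb]) auto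
  have "\<bar>Nf t' y' hM - Nf t y hM\<bar> \<le> M * (\<bar>y' - y\<bar> + Lc * \<bar>t' - t\<bar>)"
    by (rule Lip_scaled[OF hMm hMb t y])
  then show ?thesis using dec[OF t(1) y(1)] dec[OF t(2) y(2)] rB[OF t(1) y(1)] rB[OF t(2) y(2)]
    by linarith
qed

lemma trunc_tail:
  assumes G: "integrable lam G"
  shows "(\<lambda>m. \<integral>w. max 0 (G w - real m) \<partial>lam) \<longlonglongrightarrow> 0"
proof -
  have "(\<lambda>m. \<integral>w. max 0 (G w - real m) \<partial>lam) \<longlonglongrightarrow> (\<integral>w. 0 \<partial>lam)"
  proof (rule integral_dominated_convergence[where w="\<lambda>w. \<bar>G w\<bar>"])
    show "(\<lambda>w. 0::real) \<in> borel_measurable lam" by simp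
    show "(\<lambda>w. max 0 (G w - real i)) \<in> borel_measurable lam" for i using G by measurable
    show "integrable lam (\<lambda>w. \<bar>G w\<bar>)" using G by simp
    show "AE w in lam. (\<lambda>i. max 0 (G w - real i)) \<longlonglongrightarrow> 0"
    proof (rule AE_I2)
      fix w
      obtain N :: nat where "G w < real N" using reals_Archimedean2 by blast
      then have "\<forall>n\<ge>N. max 0 (G w - real n) = 0" by auto
      then show "(\<lambda>i. max 0 (G w - real i)) \<longlonglongrightarrow> 0"
        by (intro tendsto_eventually) (auto simp: eventually_sequentially)
    qed
    show "AE w in lam. norm (max 0 (G w - real i)) \<le> \<bar>G w\<bar>" for i
      by (intro AE_I2) auto
  qed
  then show ?thesis by simp
qed

lemma seqN:
  fixes s y :: "nat \<Rightarrow> real" and g :: "nat \<Rightarrow> fn \<Rightarrow> real"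
  assumes s: "\<And>n. s n \<in> {0..T}" "s \<longlonglongrightarrow> s0" "s0 \<in> {0..T}"
    and y: "\<And>n. y n \<in> {0..1}" "y \<longlonglongrightarrow> y0" "y0 \<in> {0..1}"
    and gm: "\<And>n. g n \<in> borel_measurable lam" "g0 \<in> borel_measurable lam"
    and G: "integrable lam G"
    and gb: "\<And>n w. w \<in> W \<Longrightarrow> \<bar>g n w\<bar> \<le> G w" "\<And>w. w \<in> W \<Longrightarrow> \<bar>g0 w\<bar> \<le> G w"
    and conv: "\<And>w. w \<in> W \<Longrightarrow> (\<lambda>n. g n w) \<longlonglongrightarrow> g0 w"
  shows "(\<lambda>n. Nf (s n) (y n) (g n)) \<longlonglongrightarrow> Nf s0 y0 g0"
proof -
  have y0: "0 \<le> y n" for n using y(1)[of n] by auto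
  have dm: "(\<lambda>w. \<bar>g n w - g0 w\<bar>) \<in> borel_measurable lam" for n using gm by measurable
  have D: "(\<lambda>n. \<integral>w. \<bar>g n w - g0 w\<bar> \<partial>lam) \<longlonglongrightarrow> (\<integral>w. 0 \<partial>lam)"
  proof (rule integral_dominated_convergence[where w="\<lambda>w. 2 * G w"])
    show "(\<lambda>w. 0::real) \<in> borel_measurable lam" by simp
    show "integrable lam (\<lambda>w. 2 * G w)" using G by simp
    show "AE w in lam. (\<lambda>n. \<bar>g n w - g0 w\<bar>) \<longlonglongrightarrow> 0"
    proof (rule AE_I2)
      fix w assume "w \<in> space lam"
      then have "(\<lambda>n. g n w - g0 w) \<longlonglongrightarrow> g0 w - g0 w" using lam_space conv by (intro tendsto_intros) auto
      then show "(\<lambda>n. \<bar>g n w - g0 w\<bar>) \<longlonglongrightarrow> 0" using tendsto_rabs_zero_iff by fastforce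
    qed
    show "AE w in lam. norm \<bar>g n w - g0 w\<bar> \<le> 2 * G w" for n
    proof (rule AE_I2)
      fix w assume "w \<in> space lam"
      then show "norm \<bar>g n w - g0 w\<bar> \<le> 2 * G w" using gb(1)[of w n] gb(2)[of w] lam_space by auto
    qed
  qed (rule dm)
  have P1: "(\<lambda>n. Nf (s n) (y n) (g n) - Nf (s n) (y n) g0) \<longlonglongrightarrow> 0"
  proof (rule Lim_null_comparison[OF _ D[simplified]])
    show "\<forall>\<^sub>F n in sequentially. norm (Nf (s n) (y n) (g n) - Nf (s n) (y n) g0) \<le> (\<integral>w. \<bar>g n w - g0 w\<bar> \<partial>lam)"
    proof (intro always_eventually allI)
      fix n
      have i1: "integrable (mu (s n)) (\<lambda>p. indicator (W \<times> {y n..<1}) p * g n (fst p))"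
        by (rule Nf_int(1)[OF s(1) y0 gm(1) G gb(1)])
      have i2: "integrable (mu (s n)) (\<lambda>p. indicator (W \<times> {y n..<1}) p * g0 (fst p))"
        by (rule Nf_int(1)[OF s(1) y0 gm(2) G gb(2)])
      have "\<bar>Nf (s n) (y n) (\<lambda>w. g n w - g0 w)\<bar> \<le> (\<integral>w. \<bar>g n w - g0 w\<bar> \<partial>lam)"
      proof (rule Nf_int(2)[OF s(1) y0 _ _ order_refl])
        show "(\<lambda>w. g n w - g0 w) \<in> borel_measurable lam" using gm by measurable
        show "integrable lam (\<lambda>w. \<bar>g n w - g0 w\<bar>)"
          using intb[OF G gm(1) gb(1)] intb[OF G gm(2) gb(2)] by auto
      qed
      then show "norm (Nf (s n) (y n) (g n) - Nf (s n) (y n) g0) \<le> (\<integral>w. \<bar>g n w - g0 w\<bar> \<partial>lam)"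
        using Nf_add(2)[OF i1 i2] by simp
    qed
  qed
  have P2: "(\<lambda>n. Nf (s n) (y n) g0) \<longlonglongrightarrow> Nf s0 y0 g0"
    unfolding tendsto_iff
  proof (intro allI impI)
    fix e :: real assume e: "e > 0"
    have "\<forall>\<^sub>F m in sequentially. (\<integral>w. max 0 (G w - real m) \<partial>lam) < e / 4"
      using order_tendstoD(2)[OF trunc_tail[OF G], of "e/4"] e by simp
    then obtain m where m: "(\<integral>w. max 0 (G w - real m) \<partial>lam) < e / 4"
      by (auto simp: eventually_sequentially)
    have "(\<lambda>n. real m * (\<bar>y n - y0\<bar> + Lc * \<bar>s n - s0\<bar>)) \<longlonglongrightarrow> real m * (\<bar>y0 - y0\<bar> + Lc * \<bar>s0 - s0\<bar>)"
      using s(2) y(2) by (intro tendsto_intros)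
    then have "\<forall>\<^sub>F n in sequentially. real m * (\<bar>y n - y0\<bar> + Lc * \<bar>s n - s0\<bar>) < e / 2"
      using e by (intro order_tendstoD(2)) auto
    then show "\<forall>\<^sub>F n in sequentially. dist (Nf (s n) (y n) g0) (Nf s0 y0 g0) < e"
    proof eventually_elim
      case (elim n)
      have "\<bar>Nf (s n) (y n) g0 - Nf s0 y0 g0\<bar> \<le> 2 * (\<integral>w. max 0 (G w - real m) \<partial>lam) + real m * (\<bar>y n - y0\<bar> + Lc * \<bar>s n - s0\<bar>)"
        by (rule TE[OF gm(2) G gb(2) of_nat_0_le_iff s(3) s(1) y(3) y(1)])
      then show ?case using m elim by (simp add: dist_real_def)
    qed
  qed
  have "(\<lambda>n. (Nf (s n) (y n) (g n) - Nf (s n) (y n) g0) + Nf (s n) (y n) g0) \<longlonglongrightarrow> 0 + Nf s0 y0 g0"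
    by (intro tendsto_add P1 P2)
  then show ?thesis by simp
qed

end


context base begin

lemma dwdy_cont_x: assumes w: "w \<in> W" and s: "s \<in> {0..T}"
  shows "continuous_on {0..1} (\<lambda>x. dwdy w x s)"
proof -
  have r: "(0, s) \<in> rect T" using s unfolding rect_def by auto
  have "continuous_on {0..1} (\<lambda>x. (\<lambda>q. dwdy w (fst q) (snd q)) (x, s))"
    by (rule continuous_on_compose2[OF C1_dwdy(2)[OF wC1[OF w] r]])
       (use s in \<open>auto intro!: continuous_intros simp: rect_def\<close>)
  then show ?thesis by simp
qed

lemma ftc_w:
  assumes w: "w \<in> W" and s: "s \<in> {0..T}" and z: "0 \<le> z" "z \<le> 1"
  shows "integrable lborel (\<lambda>x. indicator {z<..<1} x * dwdy w x s)"
    "(\<integral>x. indicator {z<..<1} x * dwdy w x s \<partial>lborel) = w 1 s - w z s"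
proof -
  have c: "continuous_on {z..1} (\<lambda>x. dwdy w x s)"
    by (rule continuous_on_subset[OF dwdy_cont_x[OF w s]]) (use z in auto)
  have si: "set_integrable lborel {z..1} (\<lambda>x. dwdy w x s)"
    unfolding set_integrable_def by (rule borel_integrable_compact[OF compact_Icc c])
  have "((\<lambda>x. dwdy w x s) has_integral (w 1 s - w z s)) {z..1}"
  proof (rule fundamental_theorem_of_calculus[OF z(2)])
    fix x assume x: "x \<in> {z..1}"
    then have "(x, s) \<in> rect T" using z s unfolding rect_def by auto
    from C1_dwdy(1)[OF wC1[OF w] this]
    show "((\<lambda>y. w y s) has_vector_derivative dwdy w x s) (at x within {z..1})"
      by (rule has_vector_derivative_within_subset) (use z in auto)
  qed
  then have I1: "(LINT x:{z..1}|lborel. dwdy w x s) = w 1 s - w z s"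
    using set_borel_integral_eq_integral(2)[OF si] by (simp add: integral_unique)
  have m1: "(\<lambda>x. indicator {z..1} x *\<^sub>R dwdy w x s) \<in> borel_measurable borel"
    by (rule borel_measurable_continuous_on_indicator[OF _ c]) simp
  have m2: "(\<lambda>x. indicator {z<..<1} x *\<^sub>R dwdy w x s) \<in> borel_measurable borel"
    by (rule borel_measurable_continuous_on_indicator)
       (auto intro: continuous_on_subset[OF c])
  have ae: "AE x in lborel. indicator {z<..<1} x * dwdy w x s = indicator {z..1} x * dwdy w x s"
    using AE_lborel_singleton[of z] AE_lborel_singleton[of 1]
    by eventually_elim (auto simp: indicator_def)
  have i1: "integrable lborel (\<lambda>x. indicator {z..1} x * dwdy w x s)"
    using si unfolding set_integrable_def by simp
  have m1': "(\<lambda>x. indicator {z..1} x * dwdy w x s) \<in> borel_measurable lborel" using m1 by simp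
  have m2': "(\<lambda>x. indicator {z<..<1} x * dwdy w x s) \<in> borel_measurable lborel" using m2 by simp
  show "integrable lborel (\<lambda>x. indicator {z<..<1} x * dwdy w x s)"
    using integrable_cong_AE[OF m2' m1' ae] i1 by (rule iffD2)
  have "(\<integral>x. indicator {z<..<1} x * dwdy w x s \<partial>lborel) = (\<integral>x. indicator {z..1} x * dwdy w x s \<partial>lborel)"
    by (rule integral_cong_AE[OF m2' m1' ae])
  then show "(\<integral>x. indicator {z<..<1} x * dwdy w x s \<partial>lborel) = w 1 s - w z s"
    using I1 unfolding set_lebesgue_integral_def by simp
qed


definition Rf :: "real \<Rightarrow> real \<Rightarrow> (fn \<Rightarrow> real) \<Rightarrow> real" where
  "Rf s y f = (\<integral>p\<in>W \<times> {y..<1}. f (fst p) * fst p (snd p) s \<partial>mu s)"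

definition Qf :: "real \<Rightarrow> real \<Rightarrow> (fn \<Rightarrow> real) \<Rightarrow> real" where
  "Qf s y f = (\<integral>x\<in>{y..<1}. (\<integral>p\<in>W \<times> {y..<x}. f (fst p) * dwdy (fst p) x s \<partial>mu s) \<partial>lborel)"

lemma I01_id: "(\<lambda>z. z) \<in> borel_measurable I01"
  unfolding I01_def by (rule measurable_restrict_space1) simp

lemma snd_meas: "(\<lambda>p. snd p) \<in> borel_measurable (lam \<Otimes>\<^sub>M I01)"
  by (rule measurable_compose[OF measurable_snd I01_id])

lemma CW_nonneg: "CW T W \<ge> 0"
proof -
  obtain w where w: "w \<in> W" using W_ne by auto
  show ?thesis using dwdy_bound[OF CW_fin w, of 0 0] T_pos by auto
qed

lemma IBP:
  assumes s: "s \<in> {0..T}" and y: "y \<in> {0..1}" and f: "f \<in> borel_measurable lam"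
    and fb: "\<And>w. w \<in> W \<Longrightarrow> \<bar>f w\<bar> \<le> M"
  shows "Rf s y f = Nf s y (\<lambda>w. f w * w 1 s) - Qf s y f"
proof -
  interpret Ms: prob_space "mu s" using mu_prob s by simp
  interpret P: pair_sigma_finite "mu s" lborel
    by (simp add: pair_sigma_finite_def Ms.sigma_finite_measure sigma_finite_lborel)
  obtain w0 where "w0 \<in> W" using W_ne by auto
  then have M0: "M \<ge> 0" using fb[of w0] by linarith
  define c where "c p = indicator (W \<times> {y..<1}) p * f (fst p)" for p :: "fn \<times> real"
  define F where "F q = c (fst q) * (indicator {snd (fst q)<..<1} (snd q) * dwdy (fst (fst q)) (snd q) s)"
    for q :: "(fn \<times> real) \<times> real"
  have cb: "\<bar>c p\<bar> \<le> M" if "p \<in> space (mu s)" for p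
    using that fb mu_space[OF s] M0 unfolding c_def by (auto simp: indicator_def)
  have cm: "c \<in> borel_measurable (lam \<Otimes>\<^sub>M I01)"
    unfolding c_def using ind_meas[of y 1 W] y W_sets fst_meas[OF f] by (intro borel_measurable_times) auto
  have sp: "p \<in> space (mu s) \<Longrightarrow> fst p \<in> W \<and> snd p \<in> {0..1}" for p using mu_space[OF s] by auto
  have msets: "sets (mu s \<Otimes>\<^sub>M lborel) = sets ((lam \<Otimes>\<^sub>M I01) \<Otimes>\<^sub>M lborel)"
    by (rule sets_pair_measure_cong[OF mu_sets'[OF s] refl])
  have Fm: "F \<in> borel_measurable (mu s \<Otimes>\<^sub>M lborel)"
  proof -
    have fst1: "(\<lambda>q. fst (fst q)) \<in> measurable ((lam \<Otimes>\<^sub>M I01) \<Otimes>\<^sub>M lborel) lam"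
      by (rule measurable_compose[OF measurable_fst measurable_fst])
    have snd1: "(\<lambda>q. snd (fst q)) \<in> borel_measurable ((lam \<Otimes>\<^sub>M I01) \<Otimes>\<^sub>M lborel)"
      by (rule measurable_compose[OF measurable_fst snd_meas])
    have snd2: "(\<lambda>q. snd q) \<in> borel_measurable ((lam \<Otimes>\<^sub>M I01) \<Otimes>\<^sub>M (lborel :: real measure))"
      using measurable_compose[OF measurable_snd measurable_ident_sets[of "lborel :: real measure" borel]] by simp
    have D: "(\<lambda>q. indicator {0..<1} (snd q) * dwdy (fst (fst q)) (snd q) s) \<in> borel_measurable ((lam \<Otimes>\<^sub>M I01) \<Otimes>\<^sub>M lborel)"
      by (rule joint_dwdy_comp[OF fst1 snd2 s])
    have I: "(\<lambda>q. indicator {snd (fst q)<..<1} (snd q) :: real) \<in> borel_measurable ((lam \<Otimes>\<^sub>M I01) \<Otimes>\<^sub>M lborel)"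
    proof -
      have m: "(\<lambda>q. if snd (fst q) < snd q \<and> snd q < 1 then 1 else (0::real)) \<in> borel_measurable ((lam \<Otimes>\<^sub>M I01) \<Otimes>\<^sub>M lborel)"
        using snd1 snd2 by measurable
      have eqI: "(\<lambda>q. indicator {snd (fst q)<..<1} (snd q) :: real) = (\<lambda>q. if snd (fst q) < snd q \<and> snd q < 1 then 1 else (0::real))"
        by (auto simp: indicator_def)
      show ?thesis unfolding eqI by (rule m)
    qed
    have C: "(\<lambda>q. c (fst q)) \<in> borel_measurable ((lam \<Otimes>\<^sub>M I01) \<Otimes>\<^sub>M lborel)"
      by (rule measurable_compose[OF measurable_fst cm])
    have "(\<lambda>q. c (fst q) * (indicator {snd (fst q)<..<1} (snd q) * (indicator {0..<1} (snd q) * dwdy (fst (fst q)) (snd q) s)))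
        \<in> borel_measurable ((lam \<Otimes>\<^sub>M I01) \<Otimes>\<^sub>M lborel)"
      by (rule borel_measurable_times[OF C borel_measurable_times[OF I D]])
    then have "(\<lambda>q. c (fst q) * (indicator {snd (fst q)<..<1} (snd q) * (indicator {0..<1} (snd q) * dwdy (fst (fst q)) (snd q) s)))
        \<in> borel_measurable (mu s \<Otimes>\<^sub>M lborel)"
      by (subst measurable_cong_sets[OF msets refl])
    then show ?thesis
    proof (rule measurable_cong[THEN iffD1, rotated])
      fix q :: "(fn \<times> real) \<times> real" assume "q \<in> space (mu s \<Otimes>\<^sub>M lborel)"
      then have "snd (fst q) \<in> {0..1}" using sp by (auto simp: space_pair_measure)
      then show "c (fst q) * (indicator {snd (fst q)<..<1} (snd q) * (indicator {0..<1} (snd q) * dwdy (fst (fst q)) (snd q) s)) = F q"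
        unfolding F_def by (auto simp: indicator_def)
    qed
  qed
  have inner: "integrable lborel (\<lambda>x. F (p, x))" "(\<integral>x. F (p, x) \<partial>lborel) = c p * (fst p 1 s - fst p (snd p) s)"
    if p: "p \<in> space (mu s)" for p
  proof -
    have "fst p \<in> W" "0 \<le> snd p" "snd p \<le> 1" using sp[OF p] by auto
    note ftc = ftc_w[OF this(1) s this(2,3)]
    show "integrable lborel (\<lambda>x. F (p, x))" unfolding F_def using ftc(1) by simp
    show "(\<integral>x. F (p, x) \<partial>lborel) = c p * (fst p 1 s - fst p (snd p) s)" unfolding F_def using ftc(2) by simp
  qed
  have absI: "(\<integral>x. norm (F (p, x)) \<partial>lborel) \<le> M * CW T W" if p: "p \<in> space (mu s)" for p
  proof -
    have "fst p \<in> W" using sp[OF p] by auto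
    have "(\<integral>x. norm (F (p, x)) \<partial>lborel) \<le> (\<integral>x. indicator {0..1::real} x * (M * CW T W) \<partial>lborel)"
    proof (rule Bochner_Integration.integral_mono_AE)
      show "integrable lborel (\<lambda>x. norm (F (p, x)))" using inner(1)[OF p] by simp
      show "integrable lborel (\<lambda>x. indicator {0..1::real} x * (M * CW T W))"
        by (intro integrable_mult_left integrable_real_indicator) auto
      show "AE x in lborel. norm (F (p, x)) \<le> indicator {0..1::real} x * (M * CW T W)"
      proof (rule AE_I2)
      fix x
      show "norm (F (p, x)) \<le> indicator {0..1::real} x * (M * CW T W)"
      proof (cases "x \<in> {snd p<..<1}")
        case True
        then have x: "x \<in> {0..1}" using sp[OF p] by auto
        have "\<bar>dwdy (fst p) x s\<bar> \<le> CW T W" by (rule dwdy_bound[OF CW_fin \<open>fst p \<in> W\<close> x s])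
        then show ?thesis unfolding F_def using True x cb[OF p] CW_nonneg M0
          by (auto simp: abs_mult intro: mult_mono)
      qed (auto simp: F_def indicator_def M0 CW_nonneg)
      qed
    qed
    also have "\<dots> = M * CW T W" by simp
    finally show ?thesis .
  qed
  have Fint: "integrable (mu s \<Otimes>\<^sub>M lborel) F"
  proof (rule P.Fubini_integrable[OF Fm])
    have nm: "(\<lambda>p. \<integral>x. norm (F (p, x)) \<partial>lborel) \<in> borel_measurable (mu s)"
      by (rule lborel.borel_measurable_lebesgue_integral) (use Fm in simp)
    show "integrable (mu s) (\<lambda>p. \<integral>x. norm (F (p, x)) \<partial>lborel)"
    proof (rule Bochner_Integration.integrable_bound[of _ "\<lambda>p. M * CW T W"])
      show "integrable (mu s) (\<lambda>p. M * CW T W)" by simp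
      show "AE p in mu s. norm (\<integral>x. norm (F (p, x)) \<partial>lborel) \<le> norm (M * CW T W)"
      proof (rule AE_I2)
        fix p assume p: "p \<in> space (mu s)"
        have "0 \<le> (\<integral>x. norm (F (p, x)) \<partial>lborel)" by simp
        then show "norm (\<integral>x. norm (F (p, x)) \<partial>lborel) \<le> norm (M * CW T W)"
          using absI[OF p] by simp
      qed
    qed (rule nm)
    show "AE p in mu s. integrable lborel (\<lambda>x. F (p, x))" using inner(1) by (intro AE_I2)
  qed
  have fub: "(\<integral>x. (\<integral>p. F (p, x) \<partial>mu s) \<partial>lborel) = (\<integral>p. (\<integral>x. F (p, x) \<partial>lborel) \<partial>mu s)"
    using P.Fubini_integral[of "\<lambda>p x. F (p, x)"] Fint by simp
  have "(\<integral>p. F (p, x) \<partial>mu s) = indicator {y..<1} x * (\<integral>p\<in>W \<times> {y..<x}. f (fst p) * dwdy (fst p) x s \<partial>mu s)" for x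
  proof -
    have "(\<integral>p. F (p, x) \<partial>mu s) = (\<integral>p. indicator {y..<1} x * (indicator (W \<times> {y..<x}) p * (f (fst p) * dwdy (fst p) x s)) \<partial>mu s)"
      by (rule Bochner_Integration.integral_cong[OF refl]) (auto simp: F_def c_def indicator_def)
    then show ?thesis by (simp add: set_lebesgue_integral_def)
  qed
  then have Qeq: "(\<integral>x. (\<integral>p. F (p, x) \<partial>mu s) \<partial>lborel) = Qf s y f"
    unfolding Qf_def set_lebesgue_integral_def by simp
  have A: "integrable (mu s) (\<lambda>p. indicator (W \<times> {y..<1}) p * (f (fst p) * fst p 1 s))"
  proof (rule Nf_int(1)[OF s _ _ _ ])
    show "0 \<le> y" using y by simp
    show "(\<lambda>w. f w * w 1 s) \<in> borel_measurable lam" using f eval_meas by (rule borel_measurable_times)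
    show "integrable lam (\<lambda>w. M * supnorm T w)" using MW_fin by simp
    fix w assume w: "w \<in> W"
    show "\<bar>f w * w 1 s\<bar> \<le> M * supnorm T w"
      using fb[OF w] supnorm_ge(1)[OF wC1[OF w], of 1 s] T_pos M0
      by (auto simp: abs_mult intro: mult_mono)
  qed
  have Rint: "integrable (mu s) (\<lambda>p. indicator (W \<times> {y..<1}) p * (f (fst p) * fst p (snd p) s))"
  proof (rule mu_int(1)[OF s _ _ ])
    show "(\<lambda>p. indicator (W \<times> {y..<1}) p * (f (fst p) * fst p (snd p) s)) \<in> borel_measurable (lam \<Otimes>\<^sub>M I01)"
      using ind_meas[of y 1 W] y W_sets fst_meas[OF f] joint_comp[OF measurable_fst snd_meas, of s]
      by (intro borel_measurable_times) auto
    show "integrable lam (\<lambda>w. M * supnorm T w)" using MW_fin by simp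
    fix w :: fn and z :: real assume w: "w \<in> W" and "z \<in> {0..1}"
    show "\<bar>indicator (W \<times> {y..<1}) (w, z) * (f (fst (w, z)) * fst (w, z) (snd (w, z)) s)\<bar> \<le> M * supnorm T w"
      using fb[OF w] supnorm_ge(1)[OF wC1[OF w], of z s] supnorm_ge(2)[OF wC1[OF w]] T_pos M0
      by (auto simp: abs_mult indicator_def intro: mult_mono)
  qed
  have pw: "indicator (W \<times> {y..<1}) p * (f (fst p) * fst p (snd p) s)
      = indicator (W \<times> {y..<1}) p * (f (fst p) * fst p 1 s) - (\<integral>x. F (p, x) \<partial>lborel)"
    if p: "p \<in> space (mu s)" for p
    using inner(2)[OF p] unfolding c_def by (simp add: algebra_simps)
  have Iint: "integrable (mu s) (\<lambda>p. \<integral>x. F (p, x) \<partial>lborel)"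
  proof -
    have "integrable (mu s) (\<lambda>p. indicator (W \<times> {y..<1}) p * (f (fst p) * fst p 1 s) - indicator (W \<times> {y..<1}) p * (f (fst p) * fst p (snd p) s))"
      using A Rint by simp
    moreover have "integrable (mu s) (\<lambda>p. indicator (W \<times> {y..<1}) p * (f (fst p) * fst p 1 s) - indicator (W \<times> {y..<1}) p * (f (fst p) * fst p (snd p) s))
        = integrable (mu s) (\<lambda>p. \<integral>x. F (p, x) \<partial>lborel)"
      by (rule Bochner_Integration.integrable_cong[OF refl]) (use pw in simp)
    ultimately show ?thesis by simp
  qed
  have "Rf s y f = (\<integral>p. indicator (W \<times> {y..<1}) p * (f (fst p) * fst p (snd p) s) \<partial>mu s)"
    unfolding Rf_def set_lebesgue_integral_def by simp
  also have "\<dots> = (\<integral>p. indicator (W \<times> {y..<1}) p * (f (fst p) * fst p 1 s) - (\<integral>x. F (p, x) \<partial>lborel) \<partial>mu s)"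
    by (rule Bochner_Integration.integral_cong[OF refl pw])
  also have "\<dots> = Nf s y (\<lambda>w. f w * w 1 s) - (\<integral>p. (\<integral>x. F (p, x) \<partial>lborel) \<partial>mu s)"
    using A Iint by (simp add: Nf_raw)
  also have "\<dots> = Nf s y (\<lambda>w. f w * w 1 s) - Qf s y f"
    using fub Qeq by simp
  finally show ?thesis .
qed

end


context base begin

lemma dwdy_cont_s: assumes w: "w \<in> W" and x: "x \<in> {0..1}"
  shows "continuous_on {0..T} (\<lambda>s. dwdy w x s)"
proof -
  have r: "(x, 0) \<in> rect T" using x T_pos unfolding rect_def by auto
  have "continuous_on {0..T} (\<lambda>s. (\<lambda>q. dwdy w (fst q) (snd q)) (x, s))"
    by (rule continuous_on_compose2[OF C1_dwdy(2)[OF wC1[OF w] r]])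
       (use x in \<open>auto intro!: continuous_intros simp: rect_def\<close>)
  then show ?thesis by simp
qed

lemma Nf_split:
  assumes s: "s \<in> {0..T}" and yx: "0 \<le> y" "y \<le> x" "x \<le> 1" and h: "h \<in> borel_measurable lam"
    and hb: "\<And>w. w \<in> W \<Longrightarrow> \<bar>h w\<bar> \<le> K"
  shows "(\<integral>p\<in>W \<times> {y..<x}. h (fst p) \<partial>mu s) = Nf s y h - Nf s x h"
proof -
  have i1: "integrable (mu s) (\<lambda>p. indicator (W \<times> {y..<1}) p * h (fst p))"
    by (rule Nf_bdd_int(1)[OF s yx(1) h hb])
  have i2: "integrable (mu s) (\<lambda>p. indicator (W \<times> {x..<1}) p * h (fst p))"
    by (rule Nf_bdd_int(1)[OF s _ h hb]) (use yx in auto)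
  have "(\<integral>p\<in>W \<times> {y..<x}. h (fst p) \<partial>mu s)
      = (\<integral>p. indicator (W \<times> {y..<1}) p * h (fst p) - indicator (W \<times> {x..<1}) p * h (fst p) \<partial>mu s)"
    unfolding set_lebesgue_integral_def
    by (rule Bochner_Integration.integral_cong[OF refl]) (use yx in \<open>auto simp: indicator_def\<close>)
  also have "\<dots> = Nf s y h - Nf s x h" using i1 i2 by (simp add: Nf_raw)
  finally show ?thesis .
qed

lemma seqQ:
  fixes s y :: "nat \<Rightarrow> real" and f :: "nat \<Rightarrow> fn \<Rightarrow> real"
  assumes s: "\<And>n. s n \<in> {0..T}" "s \<longlonglongrightarrow> s0" "s0 \<in> {0..T}"
    and y: "\<And>n. y n \<in> {0..1}" "y \<longlonglongrightarrow> y0" "y0 \<in> {0..1}"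
    and fm: "\<And>n. f n \<in> borel_measurable lam" "f0 \<in> borel_measurable lam"
    and fb: "\<And>n w. w \<in> W \<Longrightarrow> \<bar>f n w\<bar> \<le> K" "\<And>w. w \<in> W \<Longrightarrow> \<bar>f0 w\<bar> \<le> K"
    and conv: "\<And>w. w \<in> W \<Longrightarrow> (\<lambda>n. f n w) \<longlonglongrightarrow> f0 w"
  shows "(\<lambda>n. Qf (s n) (y n) (f n)) \<longlonglongrightarrow> Qf s0 y0 f0"
proof -
  obtain w0 where "w0 \<in> W" using W_ne by auto
  then have K0: "K \<ge> 0" using fb(2)[of w0] by linarith
  define q where "q t z g x = indicator {z..<1} x * (\<integral>p\<in>W \<times> {z..<x}. g (fst p) * dwdy (fst p) x t \<partial>mu t)"
    for t z :: real and g :: "fn \<Rightarrow> real" and x :: real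
  have Qq: "Qf t z g = (\<integral>x. q t z g x \<partial>lborel)" for t z g
    unfolding Qf_def q_def set_lebesgue_integral_def by simp
  have qN: "q t z g x = Nf t z (\<lambda>w. g w * dwdy w x t) - Nf t x (\<lambda>w. g w * dwdy w x t)"
    if t: "t \<in> {0..T}" and z: "0 \<le> z" and x: "z \<le> x" "x < 1" and g: "g \<in> borel_measurable lam"
      and gb: "\<And>w. w \<in> W \<Longrightarrow> \<bar>g w\<bar> \<le> K" for t z g x
  proof -
    have hm: "(\<lambda>w. g w * dwdy w x t) \<in> borel_measurable lam"
      using g dwdy_meas[of x t] z x t by (intro borel_measurable_times) auto
    have hb: "\<bar>g w * dwdy w x t\<bar> \<le> K * CW T W" if "w \<in> W" for w
      using gb[OF that] dwdy_bound[OF CW_fin that, of x t] z x t K0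
      by (auto simp: abs_mult intro: mult_mono)
    show ?thesis unfolding q_def using x Nf_split[OF t z x(1) _ hm hb] by simp
  qed
  have qm: "q t z g \<in> borel_measurable lborel"
    if t: "t \<in> {0..T}" and z: "0 \<le> z" and g: "g \<in> borel_measurable lam" for t z g
  proof -
    interpret Mt: prob_space "mu t" using mu_prob t by simp
    define q' where "q' x = indicator {z..<1} x * (\<integral>p. indicator (W \<times> {z..<x}) p * (g (fst p) * (indicator {0..<1} x * dwdy (fst p) x t)) \<partial>mu t)"
      for x
    have "q t z g = q'" unfolding q_def q'_def set_lebesgue_integral_def
      using z by (auto simp: indicator_def fun_eq_iff)
    moreover have "q' \<in> borel_measurable lborel"
    proof -
      have msets: "sets (lborel \<Otimes>\<^sub>M mu t) = sets (lborel \<Otimes>\<^sub>M (lam \<Otimes>\<^sub>M I01))"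
        by (rule sets_pair_measure_cong[OF refl mu_sets'[OF t]])
      have fst1: "(\<lambda>q. fst (snd q)) \<in> measurable (lborel \<Otimes>\<^sub>M (lam \<Otimes>\<^sub>M I01)) lam"
        by (rule measurable_compose[OF measurable_snd measurable_fst])
      have snd1: "(\<lambda>q. snd (snd q)) \<in> borel_measurable (lborel \<Otimes>\<^sub>M (lam \<Otimes>\<^sub>M I01))"
        by (rule measurable_compose[OF measurable_snd snd_meas])
      have fst2: "(\<lambda>q. fst q) \<in> borel_measurable ((lborel :: real measure) \<Otimes>\<^sub>M (lam \<Otimes>\<^sub>M I01))"
        using measurable_compose[OF measurable_fst measurable_ident_sets[of "lborel :: real measure" borel]] by simp
      have D: "(\<lambda>q. indicator {0..<1} (fst q) * dwdy (fst (snd q)) (fst q) t) \<in> borel_measurable (lborel \<Otimes>\<^sub>M (lam \<Otimes>\<^sub>M I01))"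
        by (rule joint_dwdy_comp[OF fst1 fst2 t])
      have I: "(\<lambda>q. indicator (W \<times> {z..<fst q}) (snd q) :: real) \<in> borel_measurable (lborel \<Otimes>\<^sub>M (lam \<Otimes>\<^sub>M I01))"
      proof -
        have WW: "(\<lambda>q. indicator W (fst (snd q)) :: real) \<in> borel_measurable (lborel \<Otimes>\<^sub>M (lam \<Otimes>\<^sub>M I01))"
          by (rule measurable_compose[OF fst1 borel_measurable_indicator[OF W_sets]])
        have m: "(\<lambda>q. indicator W (fst (snd q)) * (if z \<le> snd (snd q) \<and> snd (snd q) < fst q then 1 else (0::real))) \<in> borel_measurable (lborel \<Otimes>\<^sub>M (lam \<Otimes>\<^sub>M I01))"
          using WW snd1 fst2 by measurable
        have eqI: "(\<lambda>q. indicator (W \<times> {z..<fst q}) (snd q) :: real) = (\<lambda>q. indicator W (fst (snd q)) * (if z \<le> snd (snd q) \<and> snd (snd q) < fst q then 1 else (0::real)))"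
          by (auto simp: indicator_def fun_eq_iff)
        show ?thesis unfolding eqI by (rule m)
      qed
      have G: "(\<lambda>q. g (fst (snd q))) \<in> borel_measurable (lborel \<Otimes>\<^sub>M (lam \<Otimes>\<^sub>M I01))"
        by (rule measurable_compose[OF fst1 g])
      have "(\<lambda>q. indicator (W \<times> {z..<fst q}) (snd q) * (g (fst (snd q)) * (indicator {0..<1} (fst q) * dwdy (fst (snd q)) (fst q) t)))
          \<in> borel_measurable (lborel \<Otimes>\<^sub>M (lam \<Otimes>\<^sub>M I01))"
        by (rule borel_measurable_times[OF I borel_measurable_times[OF G D]])
      then have "(\<lambda>q. indicator (W \<times> {z..<fst q}) (snd q) * (g (fst (snd q)) * (indicator {0..<1} (fst q) * dwdy (fst (snd q)) (fst q) t)))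
          \<in> borel_measurable (lborel \<Otimes>\<^sub>M mu t)"
        by (subst measurable_cong_sets[OF msets refl])
      then have "(\<lambda>x. \<integral>p. indicator (W \<times> {z..<x}) p * (g (fst p) * (indicator {0..<1} x * dwdy (fst p) x t)) \<partial>mu t) \<in> borel_measurable lborel"
        by (intro Mt.borel_measurable_lebesgue_integral) simp
      then show ?thesis unfolding q'_def by measurable
    qed
    ultimately show ?thesis by simp
  qed
  have qb: "\<bar>q t z g x\<bar> \<le> indicator {0..1::real} x * (2 * (K * CW T W))"
    if t: "t \<in> {0..T}" and z: "0 \<le> z" and g: "g \<in> borel_measurable lam" and gb: "\<And>w. w \<in> W \<Longrightarrow> \<bar>g w\<bar> \<le> K" for t z g x
  proof (cases "x \<in> {z..<1}")
    case True
    have hm: "(\<lambda>w. g w * dwdy w x t) \<in> borel_measurable lam"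
      using g dwdy_meas[of x t] z True t by (intro borel_measurable_times) auto
    have hb: "\<bar>g w * dwdy w x t\<bar> \<le> K * CW T W" if "w \<in> W" for w
      using gb[OF that] dwdy_bound[OF CW_fin that, of x t] z True t K0
      by (auto simp: abs_mult intro: mult_mono)
    have "\<bar>q t z g x\<bar> \<le> \<bar>Nf t z (\<lambda>w. g w * dwdy w x t)\<bar> + \<bar>Nf t x (\<lambda>w. g w * dwdy w x t)\<bar>"
      using qN[OF t z _ _ g gb, of x] True by auto
    moreover have "\<bar>Nf t z (\<lambda>w. g w * dwdy w x t)\<bar> \<le> K * CW T W" by (rule Nf_bdd_int(2)[OF t z hm hb])
    moreover have "\<bar>Nf t x (\<lambda>w. g w * dwdy w x t)\<bar> \<le> K * CW T W" by (rule Nf_bdd_int(2)[OF t _ hm hb]) (use True z in auto)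
    ultimately have "\<bar>q t z g x\<bar> \<le> 2 * (K * CW T W)" by linarith
    then show ?thesis using True z by (simp add: indicator_def)
  next
    case False
    then have "q t z g x = 0" unfolding q_def by simp
    then show ?thesis using K0 CW_nonneg by (simp add: indicator_def)
  qed
  have y0n: "0 \<le> y n" for n using y(1)[of n] by auto
  have y00: "0 \<le> y0" using y(3) by auto
  have "(\<lambda>n. \<integral>x. q (s n) (y n) (f n) x \<partial>lborel) \<longlonglongrightarrow> (\<integral>x. q s0 y0 f0 x \<partial>lborel)"
  proof (rule integral_dominated_convergence[where w="\<lambda>x. indicator {0..1::real} x * (2 * (K * CW T W))"])
    show "q s0 y0 f0 \<in> borel_measurable lborel" by (rule qm[OF s(3) y00 fm(2)])
    show "q (s n) (y n) (f n) \<in> borel_measurable lborel" for n by (rule qm[OF s(1) y0n fm(1)])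
    show "integrable lborel (\<lambda>x. indicator {0..1::real} x * (2 * (K * CW T W)))"
      by (intro integrable_mult_left integrable_real_indicator) auto
    show "AE x in lborel. norm (q (s n) (y n) (f n) x) \<le> indicator {0..1::real} x * (2 * (K * CW T W))" for n
      using qb[OF s(1) y0n fm(1) fb(1)] by (intro AE_I2) simp
    show "AE x in lborel. (\<lambda>n. q (s n) (y n) (f n) x) \<longlonglongrightarrow> q s0 y0 f0 x"
      using AE_lborel_singleton[of y0]
    proof eventually_elim
      case (elim x)
      show ?case
      proof (cases "x < y0")
        case True
        have "\<forall>\<^sub>F n in sequentially. x < y n" by (rule order_tendstoD(1)[OF y(2) True])
        then have ev: "\<forall>\<^sub>F n in sequentially. 0 = q (s n) (y n) (f n) x"
          by eventually_elim (simp add: q_def)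
        have "q s0 y0 f0 x = 0" using True by (simp add: q_def)
        then show ?thesis using Lim_transform_eventually[OF tendsto_const ev] by simp
      next
        case False
        then have xy: "y0 < x" using elim by simp
        show ?thesis
        proof (cases "x < 1")
          case False
          then show ?thesis by (simp add: q_def)
        next
          case True
          have x01: "x \<in> {0..1}" using xy y00 True by auto
          have ev: "\<forall>\<^sub>F n in sequentially. y n < x" by (rule order_tendstoD(2)[OF y(2) xy])
          define h where "h n w = f n w * dwdy w x (s n)" for n w
          define h0 where "h0 w = f0 w * dwdy w x s0" for w
          have hm: "h n \<in> borel_measurable lam" for n
            unfolding h_def using fm(1) dwdy_meas[of x "s n"] x01 True s(1) by (intro borel_measurable_times) auto
          have h0m: "h0 \<in> borel_measurable lam"
            unfolding h0_def using fm(2) dwdy_meas[of x s0] x01 True s(3) by (intro borel_measurable_times) auto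
          have Gi: "integrable lam (\<lambda>w. K * CW T W)"
          proof -
            interpret L: prob_space lam by (rule lam_prob)
            show ?thesis by simp
          qed
          have hb: "\<bar>h n w\<bar> \<le> K * CW T W" if "w \<in> W" for n w
            unfolding h_def using fb(1)[OF that] dwdy_bound[OF CW_fin that x01 s(1)] K0
            by (auto simp: abs_mult intro: mult_mono)
          have h0b: "\<bar>h0 w\<bar> \<le> K * CW T W" if "w \<in> W" for w
            unfolding h0_def using fb(2)[OF that] dwdy_bound[OF CW_fin that x01 s(3)] K0
            by (auto simp: abs_mult intro: mult_mono)
          have hc: "(\<lambda>n. h n w) \<longlonglongrightarrow> h0 w" if w: "w \<in> W" for w
          proof -
            have "(\<lambda>n. dwdy w x (s n)) \<longlonglongrightarrow> dwdy w x s0"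
              by (rule continuous_on_tendsto_compose[OF dwdy_cont_s[OF w x01] s(2) s(3)]) (use s(1) in auto)
            then show ?thesis unfolding h_def h0_def by (intro tendsto_mult conv w)
          qed
          have L1: "(\<lambda>n. Nf (s n) (y n) (h n)) \<longlonglongrightarrow> Nf s0 y0 h0"
            by (rule seqN[OF s y hm h0m Gi hb h0b hc])
          have L2: "(\<lambda>n. Nf (s n) x (h n)) \<longlonglongrightarrow> Nf s0 x h0"
            by (rule seqN[OF s _ tendsto_const x01 hm h0m Gi hb h0b hc]) (use x01 in simp)
          have lim1: "(\<lambda>n. Nf (s n) (y n) (h n) - Nf (s n) x (h n)) \<longlonglongrightarrow> Nf s0 y0 h0 - Nf s0 x h0"
            by (rule tendsto_diff[OF L1 L2])
          have eq0: "q s0 y0 f0 x = Nf s0 y0 h0 - Nf s0 x h0"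
            unfolding h0_def by (rule qN[OF s(3) y00 _ True fm(2) fb(2)]) (use xy in simp)
          have ev2: "\<forall>\<^sub>F n in sequentially. Nf (s n) (y n) (h n) - Nf (s n) x (h n) = q (s n) (y n) (f n) x"
            using ev
          proof eventually_elim
            case (elim n)
            show ?case
              unfolding h_def by (rule qN[OF s(1) y0n _ True fm(1) fb(1), symmetric]) (use elim in simp)
          qed
          show ?thesis using Lim_transform_eventually[OF lim1 ev2] eq0 by simp
        qed
      qed
    qed
  qed
  then show ?thesis unfolding Qq .
qed


lemma seqR:
  fixes s y :: "nat \<Rightarrow> real"
  assumes s: "\<And>n. s n \<in> {0..T}" "s \<longlonglongrightarrow> s0" "s0 \<in> {0..T}"
    and y: "\<And>n. y n \<in> {0..1}" "y \<longlonglongrightarrow> y0" "y0 \<in> {0..1}"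
    and fm: "f \<in> borel_measurable lam" and fb: "\<And>w. w \<in> W \<Longrightarrow> \<bar>f w\<bar> \<le> K"
  shows "(\<lambda>n. Rf (s n) (y n) f) \<longlonglongrightarrow> Rf s0 y0 f"
proof -
  obtain w0 where "w0 \<in> W" using W_ne by auto
  then have K0: "K \<ge> 0" using fb[of w0] by linarith
  have gm: "(\<lambda>w. f w * w 1 t) \<in> borel_measurable lam" for t
    using fm eval_meas by (rule borel_measurable_times)
  have Gi: "integrable lam (\<lambda>w. K * supnorm T w)" using MW_fin by simp
  have gb: "\<bar>f w * w 1 t\<bar> \<le> K * supnorm T w" if "w \<in> W" for w t
    using fb[OF that] supnorm_ge(1)[OF wC1[OF that], of 1 t] T_pos K0
    by (auto simp: abs_mult intro: mult_mono)
  have gc: "(\<lambda>n. f w * w 1 (s n)) \<longlonglongrightarrow> f w * w 1 s0" if w: "w \<in> W" for w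
  proof -
    have "(\<lambda>n. w 1 (s n)) \<longlonglongrightarrow> w 1 s0"
      by (rule continuous_on_tendsto_compose[OF w_cont_u[OF w] s(2) s(3)]) (use s(1) in auto)
    then show ?thesis by (intro tendsto_mult tendsto_const)
  qed
  have L1: "(\<lambda>n. Nf (s n) (y n) (\<lambda>w. f w * w 1 (s n))) \<longlonglongrightarrow> Nf s0 y0 (\<lambda>w. f w * w 1 s0)"
    by (rule seqN[OF s y gm gm Gi gb gb gc])
  have L2: "(\<lambda>n. Qf (s n) (y n) f) \<longlonglongrightarrow> Qf s0 y0 f"
    by (rule seqQ[OF s y fm fm fb fb tendsto_const])
  have "(\<lambda>n. Nf (s n) (y n) (\<lambda>w. f w * w 1 (s n)) - Qf (s n) (y n) f) \<longlonglongrightarrow> Nf s0 y0 (\<lambda>w. f w * w 1 s0) - Qf s0 y0 f"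
    by (rule tendsto_diff[OF L1 L2])
  moreover have "Rf (s n) (y n) f = Nf (s n) (y n) (\<lambda>w. f w * w 1 (s n)) - Qf (s n) (y n) f" for n
    by (rule IBP[OF s(1) y(1) fm fb])
  moreover have "Rf s0 y0 f = Nf s0 y0 (\<lambda>w. f w * w 1 s0) - Qf s0 y0 f"
    by (rule IBP[OF s(3) y(3) fm fb])
  ultimately show ?thesis by simp
qed

end


context base begin

lemma Rf_raw: "Rf s y g = (\<integral>p. indicator (W \<times> {y..<1}) p * (g (fst p) * fst p (snd p) s) \<partial>mu s)"
  by (simp add: Rf_def set_lebesgue_integral_def)

lemma Rf_int:
  assumes s: "s \<in> {0..T}" and y: "y \<in> {0..1}" and g: "g \<in> borel_measurable lam"
    and gb: "\<And>w. w \<in> W \<Longrightarrow> \<bar>g w\<bar> \<le> K"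
  shows "integrable (mu s) (\<lambda>p. indicator (W \<times> {y..<1}) p * (g (fst p) * fst p (snd p) s))"
    "\<bar>Rf s y g\<bar> \<le> (\<integral>w. \<bar>g w\<bar> * supnorm T w \<partial>lam)"
proof -
  obtain w0 where "w0 \<in> W" using W_ne by auto
  then have K0: "K \<ge> 0" using gb[of w0] by linarith
  have m: "(\<lambda>p. indicator (W \<times> {y..<1}) p * (g (fst p) * fst p (snd p) s)) \<in> borel_measurable (lam \<Otimes>\<^sub>M I01)"
    using ind_meas[of y 1 W] y W_sets fst_meas[OF g] joint_comp[OF measurable_fst snd_meas, of s]
    by (intro borel_measurable_times) auto
  have Gi0: "integrable lam (\<lambda>w. K * supnorm T w)" using MW_fin by simp
  have Gi: "integrable lam (\<lambda>w. \<bar>g w\<bar> * supnorm T w)"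
  proof (rule intb[OF Gi0])
    show "(\<lambda>w. \<bar>g w\<bar> * supnorm T w) \<in> borel_measurable lam"
      using g MW_fin by measurable
    fix w assume w: "w \<in> W"
    show "\<bar>\<bar>g w\<bar> * supnorm T w\<bar> \<le> K * supnorm T w"
      using gb[OF w] supnorm_ge(2)[OF wC1[OF w]] T_pos K0 by (auto simp: abs_mult intro: mult_mono)
  qed
  have bb: "\<bar>indicator (W \<times> {y..<1}) (w, z) * (g (fst (w, z)) * fst (w, z) (snd (w, z)) s)\<bar> \<le> \<bar>g w\<bar> * supnorm T w"
    if w: "w \<in> W" and "z \<in> {0..1}" for w z
    using supnorm_ge(1)[OF wC1[OF w], of z s] supnorm_ge(2)[OF wC1[OF w]] T_pos
    by (auto simp: abs_mult indicator_def intro: mult_left_mono)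
  show "integrable (mu s) (\<lambda>p. indicator (W \<times> {y..<1}) p * (g (fst p) * fst p (snd p) s))"
    by (rule mu_int(1)[OF s m Gi bb])
  show "\<bar>Rf s y g\<bar> \<le> (\<integral>w. \<bar>g w\<bar> * supnorm T w \<partial>lam)"
    unfolding Rf_raw by (rule mu_int(2)[OF s m Gi bb])
qed

lemma Rf_add:
  assumes "s \<in> {0..T}" "y \<in> {0..1}" "g \<in> borel_measurable lam" "\<And>w. w \<in> W \<Longrightarrow> \<bar>g w\<bar> \<le> K"
    "h \<in> borel_measurable lam" "\<And>w. w \<in> W \<Longrightarrow> \<bar>h w\<bar> \<le> K'"
  shows "Rf s y (\<lambda>w. g w + h w) = Rf s y g + Rf s y h"
  using Rf_int(1)[OF assms(1-4)] Rf_int(1)[OF assms(1,2,5,6)]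
  unfolding Rf_raw by (simp add: distrib_left distrib_right)

lemma Rf_cmult: "Rf s y (\<lambda>w. c * g w) = c * Rf s y g"
  unfolding Rf_raw by (simp add: mult.left_commute mult.assoc)

lemma Nf_cong: assumes "s \<in> {0..T}" "\<And>w. w \<in> W \<Longrightarrow> g w = h w" shows "Nf s y g = Nf s y h"
  unfolding Nf_raw using assms mu_space[OF assms(1)]
  by (intro Bochner_Integration.integral_cong[OF refl]) (auto simp: indicator_def)

lemma Rf_cong: assumes "s \<in> {0..T}" "\<And>w. w \<in> W \<Longrightarrow> g w = h w" shows "Rf s y g = Rf s y h"
  unfolding Rf_raw using assms mu_space[OF assms(1)]
  by (intro Bochner_Integration.integral_cong[OF refl]) (auto simp: indicator_def)

end

locale traj = base +
  fixes a :: "real \<Rightarrow> real" and t0 y0 :: real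
  assumes t0: "t0 \<in> {0..T}"
    and a_cont: "continuous_on {t0..T} a"
    and a_range: "\<And>t. t \<in> {t0..T} \<Longrightarrow> a t \<in> {0..1}"
    and a_init: "a t0 = y0"
    and bal: "\<And>t B. t \<in> {t0..T} \<Longrightarrow> B \<in> sets lam \<Longrightarrow> measure (mu t) (B \<times> {a t..<1}) =
       measure (mu t0) (B \<times> {y0..<1}) - (\<integral>s\<in>{t0..t}. (\<integral>p\<in>B \<times> {a s..<1}. fst p (snd p) s \<partial>mu s) \<partial>lborel)"
begin

lemma tT: "t \<in> {t0..T} \<Longrightarrow> t \<in> {0..T}" using t0 by auto

lemma Rc: assumes g: "g \<in> borel_measurable lam" and gb: "\<And>w. w \<in> W \<Longrightarrow> \<bar>g w\<bar> \<le> K"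
  shows "continuous_on {t0..T} (\<lambda>s. Rf s (a s) g)"
proof (rule continuous_on_sequentiallyI)
  fix u :: "nat \<Rightarrow> real" and x assume u: "\<forall>n. u n \<in> {t0..T}" and x: "x \<in> {t0..T}" and ux: "u \<longlonglongrightarrow> x"
  have "(\<lambda>n. a (u n)) \<longlonglongrightarrow> a x"
    by (rule continuous_on_tendsto_compose[OF a_cont ux x]) (use u in auto)
  moreover have "u n \<in> {0..T}" "a (u n) \<in> {0..1}" for n using u tT a_range by auto
  moreover have "x \<in> {0..T}" "a x \<in> {0..1}" using x tT a_range by auto
  ultimately show "(\<lambda>n. Rf (u n) (a (u n)) g) \<longlonglongrightarrow> Rf x (a x) g"
    by (intro seqR[OF _ ux _ _ _ _ g gb])
qed

lemma Rint: assumes g: "g \<in> borel_measurable lam" and gb: "\<And>w. w \<in> W \<Longrightarrow> \<bar>g w\<bar> \<le> K"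
  and t: "t \<le> T"
  shows "set_integrable lborel {t0..t} (\<lambda>s. Rf s (a s) g)"
proof -
  have "continuous_on {t0..t} (\<lambda>s. Rf s (a s) g)"
    by (rule continuous_on_subset[OF Rc[OF g gb]]) (use t in auto)
  then show ?thesis unfolding set_integrable_def by (rule borel_integrable_compact[OF compact_Icc])
qed

definition Lf :: "real \<Rightarrow> (fn \<Rightarrow> real) \<Rightarrow> real" where
  "Lf t g = Nf t (a t) g - Nf t0 y0 g + (\<integral>s\<in>{t0..t}. Rf s (a s) g \<partial>lborel)"

lemma GB_ind: assumes t: "t \<in> {t0..T}" and B: "B \<in> sets lam"
  shows "Lf t (indicator B) = 0"
proof -
  have BW: "B \<subseteq> W" using sets.sets_into_space[OF B] lam_space by simp
  have Nm: "Nf s z (indicator B) = measure (mu s) (B \<times> {z..<1})" if s: "s \<in> {0..T}" and z: "0 \<le> z" for s z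
  proof -
    interpret Ms: prob_space "mu s" using mu_prob s by simp
    have "Nf s z (indicator B) = (\<integral>p. indicator (B \<times> {z..<1}) p \<partial>mu s)"
      unfolding Nf_raw using BW by (intro Bochner_Integration.integral_cong[OF refl]) (auto simp: indicator_def)
    also have "\<dots> = measure (mu s) (B \<times> {z..<1})"
    proof -
      have "B \<times> {z..<1} \<inter> space (mu s) = B \<times> {z..<1}"
        using sets.sets_into_space[OF BI_mu(1)[OF s B z, of 1]] by auto
      then show ?thesis by simp
    qed
    finally show ?thesis .
  qed
  have Rm: "Rf s (a s) (indicator B) = (\<integral>p\<in>B \<times> {a s..<1}. fst p (snd p) s \<partial>mu s)" for s
    unfolding Rf_raw set_lebesgue_integral_def using BW
    by (intro Bochner_Integration.integral_cong[OF refl]) (auto simp: indicator_def)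
  have "t0 \<in> {t0..T}" using t by auto
  have y00: "0 \<le> y0" using a_range[OF \<open>t0 \<in> {t0..T}\<close>] a_init by auto
  show ?thesis unfolding Lf_def
    using bal[OF t B] Nm[OF tT[OF t]] Nm[OF t0 y00] a_range[OF t] Rm by simp
qed


lemma y0_range: "y0 \<in> {0..1}" using a_range[of t0] a_init t0 by auto

lemma Lf_add:
  assumes t: "t \<in> {t0..T}" and g: "g \<in> borel_measurable lam" "\<And>w. w \<in> W \<Longrightarrow> \<bar>g w\<bar> \<le> K"
    and h: "h \<in> borel_measurable lam" "\<And>w. w \<in> W \<Longrightarrow> \<bar>h w\<bar> \<le> K'"
  shows "Lf t (\<lambda>w. g w + h w) = Lf t g + Lf t h"
proof -
  have at: "a t \<in> {0..1}" using a_range[OF t] .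
  have N1: "Nf t (a t) (\<lambda>w. g w + h w) = Nf t (a t) g + Nf t (a t) h"
    using at by (intro Nf_add(1) Nf_bdd_int(1)[OF tT[OF t] _ g] Nf_bdd_int(1)[OF tT[OF t] _ h]) auto
  have N2: "Nf t0 y0 (\<lambda>w. g w + h w) = Nf t0 y0 g + Nf t0 y0 h"
    using y0_range by (intro Nf_add(1) Nf_bdd_int(1)[OF t0 _ g] Nf_bdd_int(1)[OF t0 _ h]) auto
  have "(\<integral>s\<in>{t0..t}. Rf s (a s) (\<lambda>w. g w + h w) \<partial>lborel) = (\<integral>s\<in>{t0..t}. Rf s (a s) g + Rf s (a s) h \<partial>lborel)"
  proof (rule set_lebesgue_integral_cong)
    show "{t0..t} \<in> sets lborel" by simp
    show "\<forall>s. s \<in> {t0..t} \<longrightarrow> Rf s (a s) (\<lambda>w. g w + h w) = Rf s (a s) g + Rf s (a s) h"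
    proof (intro allI impI)
    fix s assume "s \<in> {t0..t}"
    then have s: "s \<in> {t0..T}" using t by auto
    show "Rf s (a s) (\<lambda>w. g w + h w) = Rf s (a s) g + Rf s (a s) h"
      by (rule Rf_add[OF tT[OF s] a_range[OF s] g h])
    qed
  qed
  also have "\<dots> = (\<integral>s\<in>{t0..t}. Rf s (a s) g \<partial>lborel) + (\<integral>s\<in>{t0..t}. Rf s (a s) h \<partial>lborel)"
    using t by (intro set_integral_add(2) Rint[OF g] Rint[OF h]) auto
  finally show ?thesis unfolding Lf_def using N1 N2 by simp
qed

lemma Lf_cmult: "Lf t (\<lambda>w. c * g w) = c * Lf t g"
  unfolding Lf_def by (simp add: Nf_cmult Rf_cmult algebra_simps)

lemma Lf_cong: assumes t: "t \<in> {t0..T}" and e: "\<And>w. w \<in> W \<Longrightarrow> g w = h w" shows "Lf t g = Lf t h"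
proof -
  have "(\<integral>s\<in>{t0..t}. Rf s (a s) g \<partial>lborel) = (\<integral>s\<in>{t0..t}. Rf s (a s) h \<partial>lborel)"
  proof (rule set_lebesgue_integral_cong)
    show "{t0..t} \<in> sets lborel" by simp
    show "\<forall>s. s \<in> {t0..t} \<longrightarrow> Rf s (a s) g = Rf s (a s) h"
    proof (intro allI impI)
    fix s assume "s \<in> {t0..t}"
    then have s: "s \<in> {t0..T}" using t by auto
    show "Rf s (a s) g = Rf s (a s) h" by (rule Rf_cong[OF tT[OF s] e])
    qed
  qed
  then show ?thesis unfolding Lf_def using Nf_cong[OF tT[OF t] e] Nf_cong[OF t0 e] by simp
qed

lemma GB_simple:
  assumes t: "t \<in> {t0..T}" and C: "finite C" and A: "\<And>c. c \<in> C \<Longrightarrow> A c \<in> sets lam"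
  shows "Lf t (\<lambda>w. \<Sum>c\<in>C. c * indicator (A c) w) = 0"
  using C A
proof (induction C rule: finite_induct)
  case empty
  have "Lf t (\<lambda>w. 0 * indicator {} w) = 0 * Lf t (indicator {})" by (rule Lf_cmult)
  then show ?case by simp
next
  case (insert c C)
  have m1: "(\<lambda>w. c * indicator (A c) w) \<in> borel_measurable lam"
    using insert.prems by (intro borel_measurable_times borel_measurable_indicator) auto
  have b1: "\<bar>c * indicator (A c) w\<bar> \<le> \<bar>c\<bar>" for w by (auto simp: indicator_def)
  have m2: "(\<lambda>w. \<Sum>c\<in>C. c * indicator (A c) w) \<in> borel_measurable lam"
    using insert.prems by (intro borel_measurable_sum borel_measurable_times borel_measurable_indicator) auto
  have b2: "\<bar>\<Sum>c\<in>C. c * indicator (A c) w\<bar> \<le> (\<Sum>c\<in>C. \<bar>c\<bar>)" for w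
    by (rule order_trans[OF sum_abs sum_mono]) (auto simp: indicator_def)
  have "Lf t (\<lambda>w. \<Sum>c\<in>insert c C. c * indicator (A c) w) = Lf t (\<lambda>w. c * indicator (A c) w + (\<Sum>c\<in>C. c * indicator (A c) w))"
    by (simp only: sum.insert[OF insert.hyps(1) insert.hyps(2)])
  also have "\<dots> = Lf t (\<lambda>w. c * indicator (A c) w) + Lf t (\<lambda>w. \<Sum>c\<in>C. c * indicator (A c) w)"
    by (rule Lf_add[OF t m1 b1 m2 b2])
  also have "Lf t (\<lambda>w. c * indicator (A c) w) = c * Lf t (indicator (A c))" by (rule Lf_cmult)
  also have "Lf t (indicator (A c)) = 0" using GB_ind[OF t] insert.prems by simp
  also have "Lf t (\<lambda>w. \<Sum>c\<in>C. c * indicator (A c) w) = 0" using insert.IH insert.prems by simp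
  finally show ?case by simp
qed


lemma Rf_diff_bound:
  assumes s: "s \<in> {0..T}" and y: "y \<in> {0..1}" and g: "g \<in> borel_measurable lam" "\<And>w. w \<in> W \<Longrightarrow> \<bar>g w\<bar> \<le> K"
    and h: "h \<in> borel_measurable lam" "\<And>w. w \<in> W \<Longrightarrow> \<bar>h w\<bar> \<le> K'"
  shows "\<bar>Rf s y g - Rf s y h\<bar> \<le> (\<integral>w. \<bar>g w - h w\<bar> * supnorm T w \<partial>lam)"
proof -
  have "Rf s y (\<lambda>w. g w - h w) = Rf s y g - Rf s y h"
    using Rf_int(1)[OF s y g] Rf_int(1)[OF s y h] unfolding Rf_raw by (simp add: algebra_simps)
  moreover have "\<bar>Rf s y (\<lambda>w. g w - h w)\<bar> \<le> (\<integral>w. \<bar>g w - h w\<bar> * supnorm T w \<partial>lam)"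
  proof (rule Rf_int(2)[OF s y])
    show "(\<lambda>w. g w - h w) \<in> borel_measurable lam" using g h by measurable
    fix w assume "w \<in> W" then show "\<bar>g w - h w\<bar> \<le> K + K'" using g(2) h(2) by fastforce
  qed
  ultimately show ?thesis by simp
qed

lemma GB: assumes t: "t \<in> {t0..T}" and g: "g \<in> borel_measurable lam" and gb: "\<And>w. w \<in> W \<Longrightarrow> \<bar>g w\<bar> \<le> K"
  shows "Lf t g = 0"
proof -
  interpret L: prob_space lam by (rule lam_prob)
  obtain w0 where "w0 \<in> W" using W_ne by auto
  then have K0: "K \<ge> 0" using gb[of w0] by linarith
  obtain F where F: "\<And>i. simple_function lam (F i)" "\<And>x. x \<in> space lam \<Longrightarrow> (\<lambda>i. F i x) \<longlonglongrightarrow> g x"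
    "\<And>i x. x \<in> space lam \<Longrightarrow> dist (F i x) 0 \<le> 2 * dist (g x) 0"
    using borel_measurable_implies_sequence_metric[OF g, of 0] by blast
  have Fm: "F i \<in> borel_measurable lam" for i by (rule borel_measurable_simple_function[OF F(1)])
  have Fb: "\<bar>F i w\<bar> \<le> 2 * K" if w: "w \<in> W" for i w
  proof -
    have ws: "w \<in> space lam" using w lam_space by simp
    have "\<bar>F i w\<bar> \<le> 2 * \<bar>g w\<bar>" using F(3)[OF ws, of i] by (simp only: dist_real_def diff_zero)
    then show ?thesis using gb[OF w] by linarith
  qed
  have Fc: "(\<lambda>i. F i w) \<longlonglongrightarrow> g w" if "w \<in> W" for w using F(2) that lam_space by simp
  have LF0: "Lf t (F i) = 0" for i
  proof -
    have "Lf t (F i) = Lf t (\<lambda>w. \<Sum>c\<in>F i ` space lam. c * indicator (F i -` {c} \<inter> space lam) w)"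
    proof (rule Lf_cong[OF t])
      fix w assume "w \<in> W"
      then have ws: "w \<in> space lam" using lam_space by simp
      have "F i w = (\<Sum>c\<in>F i ` space lam. indicator (F i -` {c} \<inter> space lam) w *\<^sub>R c)"
        by (rule simple_function_indicator_representation_banach[OF F(1) ws])
      also have "\<dots> = (\<Sum>c\<in>F i ` space lam. c * indicator (F i -` {c} \<inter> space lam) w)"
        by (rule sum.cong[OF refl]) (simp only: real_scaleR_def mult.commute)
      finally show "F i w = (\<Sum>c\<in>F i ` space lam. c * indicator (F i -` {c} \<inter> space lam) w)" .
    qed
    also have "\<dots> = 0"
    proof (rule GB_simple[OF t])
      show "finite (F i ` space lam)" by (rule simple_functionD(1)[OF F(1)])
      show "F i -` {c} \<inter> space lam \<in> sets lam" for c by (rule simple_functionD(2)[OF F(1)])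
    qed
    finally show ?thesis .
  qed
  have Gc: "integrable lam (\<lambda>w. 2 * K)" by simp
  have gb2: "\<bar>g w\<bar> \<le> 2 * K" if "w \<in> W" for w using gb[OF that] K0 by simp
  have at: "a t \<in> {0..1}" using a_range[OF t] .
  have N1: "(\<lambda>i. Nf t (a t) (F i)) \<longlonglongrightarrow> Nf t (a t) g"
    by (rule seqN[OF _ tendsto_const _ _ tendsto_const _ Fm g Gc Fb gb2 Fc]) (use tT[OF t] at in auto)
  have N2: "(\<lambda>i. Nf t0 y0 (F i)) \<longlonglongrightarrow> Nf t0 y0 g"
    by (rule seqN[OF _ tendsto_const _ _ tendsto_const _ Fm g Gc Fb gb2 Fc]) (use t0 y0_range in auto)
  define MWv where "MWv = (\<integral>w. supnorm T w \<partial>lam)"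
  have Rb: "\<bar>Rf s (a s) (F i)\<bar> \<le> 2 * K * MWv" if s: "s \<in> {t0..T}" for s i
  proof -
    have "\<bar>Rf s (a s) (F i)\<bar> \<le> (\<integral>w. \<bar>F i w\<bar> * supnorm T w \<partial>lam)"
      by (rule Rf_int(2)[OF tT[OF s] a_range[OF s] Fm Fb])
    also have "\<dots> \<le> (\<integral>w. 2 * K * supnorm T w \<partial>lam)"
    proof (rule Bochner_Integration.integral_mono_AE)
      show "integrable lam (\<lambda>w. 2 * K * supnorm T w)" using MW_fin by simp
      show "integrable lam (\<lambda>w. \<bar>F i w\<bar> * supnorm T w)"
      proof (rule intb[of "\<lambda>w. 2 * K * supnorm T w"])
        show "integrable lam (\<lambda>w. 2 * K * supnorm T w)" using MW_fin by simp
        show "(\<lambda>w. \<bar>F i w\<bar> * supnorm T w) \<in> borel_measurable lam" using Fm MW_fin by measurable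
        fix w assume w: "w \<in> W"
        show "\<bar>\<bar>F i w\<bar> * supnorm T w\<bar> \<le> 2 * K * supnorm T w"
          using Fb[OF w, of i] supnorm_ge(2)[OF wC1[OF w]] T_pos by (auto simp: abs_mult intro: mult_right_mono)
      qed
      show "AE w in lam. \<bar>F i w\<bar> * supnorm T w \<le> 2 * K * supnorm T w"
      proof (rule AE_I2)
        fix w assume "w \<in> space lam"
        then have w: "w \<in> W" using lam_space by simp
        show "\<bar>F i w\<bar> * supnorm T w \<le> 2 * K * supnorm T w"
          using Fb[OF w, of i] supnorm_ge(2)[OF wC1[OF w]] T_pos by (auto intro: mult_right_mono)
      qed
    qed
    also have "\<dots> = 2 * K * MWv" unfolding MWv_def by simp
    finally show ?thesis .
  qed
  have Rconv: "(\<lambda>i. Rf s (a s) (F i)) \<longlonglongrightarrow> Rf s (a s) g" if s: "s \<in> {t0..T}" for s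
  proof -
    have D: "(\<lambda>i. \<integral>w. \<bar>F i w - g w\<bar> * supnorm T w \<partial>lam) \<longlonglongrightarrow> (\<integral>w. 0 \<partial>lam)"
    proof (rule integral_dominated_convergence[where w="\<lambda>w. 3 * K * supnorm T w"])
      show "(\<lambda>w. 0::real) \<in> borel_measurable lam" by simp
      show "(\<lambda>w. \<bar>F i w - g w\<bar> * supnorm T w) \<in> borel_measurable lam" for i using Fm g MW_fin by measurable
      show "integrable lam (\<lambda>w. 3 * K * supnorm T w)" using MW_fin by simp
      show "AE w in lam. (\<lambda>i. \<bar>F i w - g w\<bar> * supnorm T w) \<longlonglongrightarrow> 0"
      proof (rule AE_I2)
        fix w assume "w \<in> space lam"
        then have w: "w \<in> W" using lam_space by simp
        have "(\<lambda>i. \<bar>F i w - g w\<bar> * supnorm T w) \<longlonglongrightarrow> \<bar>g w - g w\<bar> * supnorm T w"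
          by (intro tendsto_intros Fc w)
        then show "(\<lambda>i. \<bar>F i w - g w\<bar> * supnorm T w) \<longlonglongrightarrow> 0" by simp
      qed
      show "AE w in lam. norm (\<bar>F i w - g w\<bar> * supnorm T w) \<le> 3 * K * supnorm T w" for i
      proof (rule AE_I2)
        fix w assume "w \<in> space lam"
        then have w: "w \<in> W" using lam_space by simp
        have "\<bar>F i w - g w\<bar> \<le> 3 * K" using Fb[OF w, of i] gb[OF w] by linarith
        then show "norm (\<bar>F i w - g w\<bar> * supnorm T w) \<le> 3 * K * supnorm T w"
          using supnorm_ge(2)[OF wC1[OF w]] T_pos by (auto simp: abs_mult intro: mult_right_mono)
      qed
    qed
    have "(\<lambda>i. Rf s (a s) (F i) - Rf s (a s) g) \<longlonglongrightarrow> 0"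
    proof (rule Lim_null_comparison[OF _ D[simplified]])
      show "\<forall>\<^sub>F i in sequentially. norm (Rf s (a s) (F i) - Rf s (a s) g) \<le> (\<integral>w. \<bar>F i w - g w\<bar> * supnorm T w \<partial>lam)"
        using Rf_diff_bound[OF tT[OF s] a_range[OF s] Fm Fb g gb] by (intro always_eventually allI) simp
    qed
    then show ?thesis by (simp add: LIM_zero_iff)
  qed
  have I: "(\<lambda>i. \<integral>s\<in>{t0..t}. Rf s (a s) (F i) \<partial>lborel) \<longlonglongrightarrow> (\<integral>s\<in>{t0..t}. Rf s (a s) g \<partial>lborel)"
    unfolding set_lebesgue_integral_def
  proof (rule integral_dominated_convergence[where w="\<lambda>s. indicator {t0..t} s * (2 * K * MWv)"])
    have tt: "t \<le> T" using t by simp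
    show "(\<lambda>s. indicator {t0..t} s *\<^sub>R Rf s (a s) g) \<in> borel_measurable lborel"
      using Rint[OF g gb tt] unfolding set_integrable_def by (rule borel_measurable_integrable)
    show "(\<lambda>s. indicator {t0..t} s *\<^sub>R Rf s (a s) (F i)) \<in> borel_measurable lborel" for i
      using Rint[OF Fm Fb tt] unfolding set_integrable_def by (rule borel_measurable_integrable)
    show "integrable lborel (\<lambda>s. indicator {t0..t} s * (2 * K * MWv))"
      by (intro integrable_mult_left integrable_real_indicator) (use emeasure_bounded_finite[of "{t0..t}"] in \<open>auto simp: less_top\<close>)
    show "AE s in lborel. (\<lambda>i. indicator {t0..t} s *\<^sub>R Rf s (a s) (F i)) \<longlonglongrightarrow> indicator {t0..t} s *\<^sub>R Rf s (a s) g"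
    proof (rule AE_I2)
      fix s :: real
      show "(\<lambda>i. indicator {t0..t} s *\<^sub>R Rf s (a s) (F i)) \<longlonglongrightarrow> indicator {t0..t} s *\<^sub>R Rf s (a s) g"
      proof (cases "s \<in> {t0..t}")
        case True
        then have "s \<in> {t0..T}" using t by auto
        then show ?thesis using Rconv True by simp
      qed simp
    qed
    show "AE s in lborel. norm (indicator {t0..t} s *\<^sub>R Rf s (a s) (F i)) \<le> indicator {t0..t} s * (2 * K * MWv)" for i
    proof (rule AE_I2)
      fix s :: real
      show "norm (indicator {t0..t} s *\<^sub>R Rf s (a s) (F i)) \<le> indicator {t0..t} s * (2 * K * MWv)"
      proof (cases "s \<in> {t0..t}")
        case True
        then have "s \<in> {t0..T}" using t by auto
        then show ?thesis using Rb True by simp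
      qed simp
    qed
  qed
  have "(\<lambda>i. Lf t (F i)) \<longlonglongrightarrow> Lf t g"
    unfolding Lf_def by (intro tendsto_add tendsto_diff N1 N2 I)
  then show ?thesis using LF0 LIMSEQ_unique[OF _ tendsto_const[of 0]] by simp
qed

end


context base begin

lemma wu_int: "w \<in> W \<Longrightarrow> 0 \<le> a \<Longrightarrow> b \<le> T \<Longrightarrow> (\<lambda>u. w 1 u) integrable_on {a..b}"
  using Omega_HK(2) set_borel_integral_eq_integral(1) by blast

lemma Omega_split: assumes w: "w \<in> W" and r: "0 \<le> r" "r \<le> t1" and t1: "t1 \<le> T"
  shows "Omega w r t1 = integral {0..t1} (\<lambda>u. w 1 u) - integral {0..r} (\<lambda>u. w 1 u)"
  using Henstock_Kurzweil_Integration.integral_combine[OF r(1) r(2) wu_int[OF w order_refl t1]] Omega_HK(1)[OF w r(1) t1] by simp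

lemma Omega_nonneg: assumes w: "w \<in> W" and r: "0 \<le> r" and t1: "t1 \<le> T"
  shows "0 \<le> Omega w r t1"
  unfolding Omega_HK(1)[OF w r t1]
  by (rule integral_nonneg[OF wu_int[OF w r t1]]) (use W_nonneg w r t1 in auto)

lemma Omega_same: assumes w: "w \<in> W" and r: "0 \<le> r" "r \<le> T" shows "Omega w r r = 0"
  unfolding Omega_HK(1)[OF w r] by simp

lemma int_bound: assumes w: "w \<in> W" and r: "0 \<le> r" "r \<le> r'" "r' \<le> T"
  shows "\<bar>integral {r..r'} (\<lambda>u. w 1 u)\<bar> \<le> (r' - r) * supnorm T w"
proof -
  have "norm (integral {r..r'} (\<lambda>u. w 1 u)) \<le> supnorm T w * Henstock_Kurzweil_Integration.content (cbox r r')"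
  proof (rule has_integral_bound)
    show "0 \<le> supnorm T w" using supnorm_ge(2)[OF wC1[OF w]] T_pos by simp
    show "((\<lambda>u. w 1 u) has_integral integral {r..r'} (\<lambda>u. w 1 u)) (cbox r r')"
      using wu_int[OF w r(1)] r by (simp add: integrable_integral)
    show "norm (w 1 x) \<le> supnorm T w" if "x \<in> cbox r r'" for x
      using supnorm_ge(1)[OF wC1[OF w]] T_pos by simp
  qed
  then show ?thesis using r by (simp add: mult.commute)
qed

lemma Omega_lip: assumes w: "w \<in> W" and r: "0 \<le> r" "r \<le> t1" and r': "0 \<le> r'" "r' \<le> t1" and t1: "t1 \<le> T"
  shows "\<bar>Omega w r' t1 - Omega w r t1\<bar> \<le> \<bar>r' - r\<bar> * supnorm T w"
proof -
  have "Omega w r' t1 - Omega w r t1 = integral {0..r} (\<lambda>u. w 1 u) - integral {0..r'} (\<lambda>u. w 1 u)"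
    using Omega_split[OF w r t1] Omega_split[OF w r' t1] by simp
  moreover have "\<bar>integral {0..r} (\<lambda>u. w 1 u) - integral {0..r'} (\<lambda>u. w 1 u)\<bar> \<le> \<bar>r' - r\<bar> * supnorm T w"
  proof (cases "r \<le> r'")
    case True
    have "integral {0..r} (\<lambda>u. w 1 u) + integral {r..r'} (\<lambda>u. w 1 u) = integral {0..r'} (\<lambda>u. w 1 u)"
      using Henstock_Kurzweil_Integration.integral_combine[OF r(1) True wu_int[OF w order_refl, of r']] r' t1 by simp
    then show ?thesis using int_bound[OF w r(1) True] r' t1 True by simp
  next
    case False
    have "integral {0..r'} (\<lambda>u. w 1 u) + integral {r'..r} (\<lambda>u. w 1 u) = integral {0..r} (\<lambda>u. w 1 u)"
      using Henstock_Kurzweil_Integration.integral_combine[OF r'(1) _ wu_int[OF w order_refl, of r]] False r t1 by simp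
    then show ?thesis using int_bound[OF w r'(1), of r] r t1 False by simp
  qed
  ultimately show ?thesis by simp
qed

lemma Omega_deriv: assumes w: "w \<in> W" and ta: "0 \<le> ta" and r: "r \<in> {ta..t1}" and t1: "t1 \<le> T"
  shows "((\<lambda>r. Omega w r t1) has_real_derivative (- w 1 r)) (at r within {ta..t1})"
proof -
  have c: "continuous_on {0..T} (\<lambda>u. w 1 u)" by (rule w_cont_u[OF w]) simp
  have rT: "r \<in> {0..T}" using r ta t1 by auto
  have "((\<lambda>x. integral {0..x} (\<lambda>u. w 1 u)) has_vector_derivative w 1 r) (at r within {0..T})"
    by (rule integral_has_vector_derivative[OF c rT])
  then have "((\<lambda>x. integral {0..x} (\<lambda>u. w 1 u)) has_real_derivative w 1 r) (at r within {ta..t1})"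
    by (simp add: has_real_derivative_iff_has_vector_derivative)
       (rule has_vector_derivative_within_subset, use ta t1 in auto)
  then have d: "((\<lambda>x. integral {0..t1} (\<lambda>u. w 1 u) - integral {0..x} (\<lambda>u. w 1 u)) has_real_derivative (- w 1 r)) (at r within {ta..t1})"
    by (auto intro!: derivative_eq_intros)
  show ?thesis
  proof (rule has_field_derivative_transform_within[OF d zero_less_one r])
    fix x assume "x \<in> {ta..t1}"
    then show "integral {0..t1} (\<lambda>u. w 1 u) - integral {0..x} (\<lambda>u. w 1 u) = Omega w x t1"
      using Omega_split[OF w _ _ t1, of x] ta by auto
  qed
qed

lemma exp_lip1: fixes A B :: real assumes "0 \<le> A" "A \<le> B" shows "\<bar>exp (- A) - exp (- B)\<bar> \<le> B - A"
proof -
  have "exp (- A) * exp (- (B - A)) = exp (- A + - (B - A))" by (rule exp_add[symmetric])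
  then have e: "exp (- B) = exp (- A) * exp (- (B - A))" by simp
  have h: "1 + (- (B - A)) \<le> exp (- (B - A))" by (rule exp_ge_add_one_self)
  have h2: "exp (- (B - A)) \<le> 1" using assms by simp
  have a: "0 \<le> 1 - exp (- (B - A))" "1 - exp (- (B - A)) \<le> B - A" using h h2 by linarith+
  have b: "exp (- A) \<le> 1" "0 \<le> exp (- A)" using assms by auto
  have "exp (- A) - exp (- B) = exp (- A) * (1 - exp (- (B - A)))" using e by (simp add: algebra_simps)
  moreover have "0 \<le> exp (- A) * (1 - exp (- (B - A)))" using a b by simp
  moreover have "exp (- A) * (1 - exp (- (B - A))) \<le> 1 * (B - A)"
    using a b by (intro mult_mono) auto
  ultimately show ?thesis by simp
qed

lemma exp_lip: fixes A B :: real assumes "0 \<le> A" "0 \<le> B" shows "\<bar>exp (- A) - exp (- B)\<bar> \<le> \<bar>A - B\<bar>"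
proof (cases "A \<le> B")
  case True
  have "\<bar>A - B\<bar> = B - A" using True by simp
  then show ?thesis using exp_lip1[OF assms(1) True] by simp
next
  case False then show ?thesis using exp_lip1[OF assms(2), of A] by (simp add: abs_minus_commute)
qed

end

locale fin = traj +
  fixes t1 :: real and B :: "fn set"
  assumes t1: "t1 \<in> {t0..T}" and B: "B \<in> sets lam"
begin

definition phi :: "real \<Rightarrow> fn \<Rightarrow> real" where "phi r w = indicator B w * exp (- Omega w r t1)"
definition Kf :: "real \<Rightarrow> real" where "Kf r = Nf r (a r) (phi r)"
definition Gf :: "real \<Rightarrow> real" where "Gf r = Qf r (a r) (phi r)"

lemma t00: "0 \<le> t0" using t0 by simp
lemma t1T: "t1 \<le> T" using t1 by simp
lemma t01: "t0 \<le> t1" using t1 by simp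
lemma S_T: "r \<in> {t0..t1} \<Longrightarrow> r \<in> {t0..T}" using t1 by auto
lemma S_0T: "r \<in> {t0..t1} \<Longrightarrow> r \<in> {0..T}" using t1 t0 by auto
lemma S_a: "r \<in> {t0..t1} \<Longrightarrow> a r \<in> {0..1}" using a_range S_T by blast

lemma phi_m: "0 \<le> r \<Longrightarrow> phi r \<in> borel_measurable lam"
  unfolding phi_def using B Omega_meas[of r t1] t1T
  by (intro borel_measurable_times borel_measurable_indicator borel_measurable_exp borel_measurable_uminus) auto

lemma phi_b: "w \<in> W \<Longrightarrow> 0 \<le> r \<Longrightarrow> \<bar>phi r w\<bar> \<le> 1"
  unfolding phi_def using Omega_nonneg[of w r t1] t1T by (auto simp: indicator_def)

lemma phi_deriv: assumes w: "w \<in> W" and r: "r \<in> {t0..t1}"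
  shows "((\<lambda>r. phi r w) has_real_derivative (phi r w * w 1 r)) (at r within {t0..t1})"
proof -
  have d: "((\<lambda>r. - Omega w r t1) has_real_derivative w 1 r) (at r within {t0..t1})"
    using DERIV_minus[OF Omega_deriv[OF w t00 r t1T]] by simp
  have "((\<lambda>r. exp (- Omega w r t1)) has_real_derivative exp (- Omega w r t1) * w 1 r) (at r within {t0..t1})"
    by (rule DERIV_chain2[OF DERIV_exp d])
  then have "((\<lambda>r. indicator B w * exp (- Omega w r t1)) has_real_derivative indicator B w * (exp (- Omega w r t1) * w 1 r)) (at r within {t0..t1})"
    by (rule DERIV_cmult)
  then show ?thesis unfolding phi_def by (simp add: mult.assoc)
qed

lemma phi_cont: assumes w: "w \<in> W" shows "continuous_on {t0..t1} (\<lambda>r. phi r w)"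
  unfolding continuous_on_eq_continuous_within
  using phi_deriv[OF w] DERIV_continuous by blast

lemma phi_lip: assumes w: "w \<in> W" and r: "r \<in> {t0..t1}" "r' \<in> {t0..t1}"
  shows "\<bar>phi r' w - phi r w\<bar> \<le> \<bar>r' - r\<bar> * supnorm T w"
proof -
  have "\<bar>exp (- Omega w r' t1) - exp (- Omega w r t1)\<bar> \<le> \<bar>Omega w r' t1 - Omega w r t1\<bar>"
    using r t00 t1T by (intro exp_lip Omega_nonneg[OF w]) auto
  also have "\<dots> \<le> \<bar>r' - r\<bar> * supnorm T w"
    using r t00 t1T by (intro Omega_lip[OF w]) auto
  finally have e: "\<bar>exp (- Omega w r' t1) - exp (- Omega w r t1)\<bar> \<le> \<bar>r' - r\<bar> * supnorm T w" .
  have "phi r' w - phi r w = indicator B w * (exp (- Omega w r' t1) - exp (- Omega w r t1))"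
    unfolding phi_def by (simp add: algebra_simps)
  then show ?thesis using e supnorm_ge(2)[OF wC1[OF w]] T_pos
    by (auto simp: indicator_def)
qed


lemma Kder: assumes r: "r \<in> {t0..t1}"
  shows "(Kf has_real_derivative Gf r) (at r within {t0..t1})"
proof -
  let ?S = "{t0..t1}"
  have rT: "r \<in> {t0..T}" using S_T[OF r] .
  have r0: "0 \<le> r" using S_0T[OF r] by simp
  have pm: "phi r \<in> borel_measurable lam" by (rule phi_m[OF r0])
  have pb: "\<And>w. w \<in> W \<Longrightarrow> \<bar>phi r w\<bar> \<le> 1" using phi_b r0 by blast
  define R where "R s = Rf s (a s) (phi r)" for s
  define I where "I x = integral {t0..x} R" for x
  have Rcont: "continuous_on ?S R" unfolding R_def
    by (rule continuous_on_subset[OF Rc[OF pm pb]]) (use t1 in auto)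
  have JI: "(\<integral>s\<in>{t0..x}. Rf s (a s) (phi r) \<partial>lborel) = I x" if x: "x \<in> ?S" for x
    unfolding I_def R_def
    by (rule set_borel_integral_eq_integral(2)[OF Rint[OF pm pb]]) (use x t1 in auto)
  have Ider: "(I has_real_derivative R r) (at r within ?S)"
    using integral_has_vector_derivative[OF Rcont r] unfolding I_def
    by (simp add: has_real_derivative_iff_has_vector_derivative)
  then have IL: "((\<lambda>x. (I x - I r) / (x - r)) \<longlongrightarrow> R r) (at r within ?S)"
    by (simp add: has_field_derivative_iff)
  have GBx: "Nf x (a x) (phi r) - Nf t0 y0 (phi r) + I x = 0" if x: "x \<in> ?S" for x
    using GB[OF S_T[OF x] pm pb] JI[OF x] unfolding Lf_def by simp
  define dq where "dq x w = (phi x w - phi r w) / (x - r)" for x w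
  define g0 where "g0 w = phi r w * w 1 r" for w
  have AL: "((\<lambda>x. Nf x (a x) (dq x)) \<longlongrightarrow> Nf r (a r) g0) (at r within ?S)"
    unfolding tendsto_at_iff_sequentially comp_def
  proof (intro allI impI)
    fix X :: "nat \<Rightarrow> real" assume X: "\<forall>i. X i \<in> ?S - {r}" and Xr: "X \<longlonglongrightarrow> r"
    have XS: "X i \<in> ?S" "X i \<noteq> r" for i using X by auto
    show "(\<lambda>i. Nf (X i) (a (X i)) (dq (X i))) \<longlonglongrightarrow> Nf r (a r) g0"
    proof (rule seqN[where G="supnorm T"])
      show "X i \<in> {0..T}" for i using S_0T[OF XS(1)] .
      show "X \<longlonglongrightarrow> r" by (rule Xr)
      show "r \<in> {0..T}" using S_0T[OF r] .
      show "a (X i) \<in> {0..1}" for i using S_a[OF XS(1)] .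
      show "(\<lambda>i. a (X i)) \<longlonglongrightarrow> a r"
        by (rule continuous_on_tendsto_compose[OF a_cont Xr rT]) (use XS S_T in auto)
      show "a r \<in> {0..1}" using S_a[OF r] .
      show "dq (X i) \<in> borel_measurable lam" for i
        unfolding dq_def using phi_m[of "X i"] pm S_0T[OF XS(1)] by (intro borel_measurable_divide borel_measurable_diff) auto
      show "g0 \<in> borel_measurable lam" unfolding g0_def using pm eval_meas by (rule borel_measurable_times)
      show "integrable lam (supnorm T)" by (rule MW_fin)
      show "\<bar>dq (X i) w\<bar> \<le> supnorm T w" if w: "w \<in> W" for i w
      proof -
        have "\<bar>phi (X i) w - phi r w\<bar> \<le> \<bar>X i - r\<bar> * supnorm T w" by (rule phi_lip[OF w r XS(1)])
        moreover have "\<bar>X i - r\<bar> > 0" using XS(2) by simp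
        ultimately show ?thesis unfolding dq_def by (simp add: abs_divide divide_le_eq mult.commute)
      qed
      show "\<bar>g0 w\<bar> \<le> supnorm T w" if w: "w \<in> W" for w
      proof -
        have "\<bar>w 1 r\<bar> \<le> supnorm T w" using supnorm_ge(1)[OF wC1[OF w]] T_pos by simp
        then show ?thesis unfolding g0_def using pb[OF w]
          by (simp add: abs_mult) (metis abs_ge_zero mult_le_one mult_right_mono mult_left_le_one_le order_trans mult.commute)
      qed
      show "(\<lambda>i. dq (X i) w) \<longlonglongrightarrow> g0 w" if w: "w \<in> W" for w
      proof -
        have "((\<lambda>x. (phi x w - phi r w) / (x - r)) \<longlongrightarrow> phi r w * w 1 r) (at r within ?S)"
          using phi_deriv[OF w r] by (simp add: has_field_derivative_iff)
        then show ?thesis unfolding dq_def g0_def tendsto_at_iff_sequentially comp_def using X Xr by blast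
      qed
    qed
  qed
  have lim: "((\<lambda>x. Nf x (a x) (dq x) - (I x - I r) / (x - r)) \<longlongrightarrow> Nf r (a r) g0 - R r) (at r within ?S)"
    by (rule tendsto_diff[OF AL IL])
  have Geq: "Nf r (a r) g0 - R r = Gf r"
    using IBP[OF S_0T[OF r] S_a[OF r] pm pb] unfolding Gf_def R_def g0_def by simp
  have eq: "(Kf x - Kf r) / (x - r) = Nf x (a x) (dq x) - (I x - I r) / (x - r)"
    if x: "x \<in> ?S" "x \<noteq> r" for x
  proof -
    have x0: "0 \<le> x" using S_0T[OF x(1)] by simp
    have ax: "0 \<le> a x" using S_a[OF x(1)] by simp
    have i1: "integrable (mu x) (\<lambda>p. indicator (W \<times> {a x..<1}) p * phi x (fst p))"
      by (rule Nf_bdd_int(1)[OF S_0T[OF x(1)] ax phi_m[OF x0] phi_b[OF _ x0]])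
    have i2: "integrable (mu x) (\<lambda>p. indicator (W \<times> {a x..<1}) p * phi r (fst p))"
      by (rule Nf_bdd_int(1)[OF S_0T[OF x(1)] ax pm pb])
    have "Nf x (a x) (phi x) - Nf x (a x) (phi r) = Nf x (a x) (\<lambda>w. phi x w - phi r w)"
      using Nf_add(2)[OF i1 i2] by simp
    also have "\<dots> = (x - r) * Nf x (a x) (dq x)"
    proof -
      have "Nf x (a x) (\<lambda>w. (x - r) * dq x w) = (x - r) * Nf x (a x) (dq x)" by (rule Nf_cmult)
      moreover have "(\<lambda>w. (x - r) * dq x w) = (\<lambda>w. phi x w - phi r w)"
        using x(2) unfolding dq_def by auto
      ultimately show ?thesis by simp
    qed
    finally have A: "Nf x (a x) (phi x) - Nf x (a x) (phi r) = (x - r) * Nf x (a x) (dq x)" .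
    have Bq: "Nf x (a x) (phi r) - Nf r (a r) (phi r) = - (I x - I r)"
      using GBx[OF x(1)] GBx[OF r] by linarith
    have "Kf x - Kf r = (x - r) * Nf x (a x) (dq x) - (I x - I r)"
      unfolding Kf_def using A Bq by linarith
    then show ?thesis using x(2) by (simp add: field_simps)
  qed
  have "((\<lambda>x. (Kf x - Kf r) / (x - r)) \<longlongrightarrow> Gf r) (at r within ?S)"
  proof (rule Lim_transform_eventually[OF lim[unfolded Geq]])
    show "\<forall>\<^sub>F x in at r within ?S. Nf x (a x) (dq x) - (I x - I r) / (x - r) = (Kf x - Kf r) / (x - r)"
      unfolding eventually_at_filter using eq by (intro always_eventually) auto
  qed
  then show ?thesis by (simp add: has_field_derivative_iff)
qed


lemma Gcont: "continuous_on {t0..t1} Gf"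
proof (rule continuous_on_sequentiallyI)
  fix u :: "nat \<Rightarrow> real" and x assume u: "\<forall>n. u n \<in> {t0..t1}" and x: "x \<in> {t0..t1}" and ux: "u \<longlonglongrightarrow> x"
  have un: "u n \<in> {t0..t1}" for n using u by auto
  show "(\<lambda>n. Gf (u n)) \<longlonglongrightarrow> Gf x" unfolding Gf_def
  proof (rule seqQ[where K=1])
    show "u n \<in> {0..T}" for n using S_0T[OF un] .
    show "u \<longlonglongrightarrow> x" by (rule ux)
    show "x \<in> {0..T}" using S_0T[OF x] .
    show "a (u n) \<in> {0..1}" for n using S_a[OF un] .
    show "(\<lambda>n. a (u n)) \<longlonglongrightarrow> a x"
      by (rule continuous_on_tendsto_compose[OF a_cont ux S_T[OF x]]) (use un S_T in auto)
    show "a x \<in> {0..1}" using S_a[OF x] .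
    show "phi (u n) \<in> borel_measurable lam" for n using phi_m S_0T[OF un] by simp
    show "phi x \<in> borel_measurable lam" using phi_m S_0T[OF x] by simp
    show "\<bar>phi (u n) w\<bar> \<le> 1" if "w \<in> W" for n w using phi_b[OF that] S_0T[OF un] by simp
    show "\<bar>phi x w\<bar> \<le> 1" if "w \<in> W" for w using phi_b[OF that] S_0T[OF x] by simp
    show "(\<lambda>n. phi (u n) w) \<longlonglongrightarrow> phi x w" if w: "w \<in> W" for w
      by (rule continuous_on_tendsto_compose[OF phi_cont[OF w] ux x]) (use un in auto)
  qed
qed

lemma main_ftc: "Kf t1 - Kf t0 = (\<integral>s\<in>{t0..t1}. Gf s \<partial>lborel)"
proof -
  have "(Gf has_integral (Kf t1 - Kf t0)) {t0..t1}"
  proof (rule fundamental_theorem_of_calculus[OF t01])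
    fix x assume "x \<in> {t0..t1}"
    then show "(Kf has_vector_derivative Gf x) (at x within {t0..t1})"
      using Kder by (simp add: has_real_derivative_iff_has_vector_derivative)
  qed
  moreover have "set_integrable lborel {t0..t1} Gf"
    unfolding set_integrable_def by (rule borel_integrable_compact[OF compact_Icc Gcont])
  ultimately show ?thesis
    using set_borel_integral_eq_integral(2) by (metis integral_unique)
qed

lemma final:
  "measure (mu t1) (B \<times> {a t1..<1}) =
     (\<integral>p\<in>B \<times> {y0..<1}. exp (- Omega (fst p) t0 t1) \<partial>mu t0)
     + (\<integral>s\<in>{t0..t1}. (\<integral>x\<in>{a s..<1}. (\<integral>p\<in>B \<times> {a s..<x}. exp (- Omega (fst p) s t1) * dwdy (fst p) x s \<partial>mu s) \<partial>lborel) \<partial>lborel)"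
proof -
  have BW: "B \<subseteq> W" using sets.sets_into_space[OF B] lam_space by simp
  have t1S: "t1 \<in> {t0..t1}" using t01 by simp
  have K1: "Kf t1 = measure (mu t1) (B \<times> {a t1..<1})"
  proof -
    interpret M1: prob_space "mu t1" using mu_prob S_0T[OF t1S] by simp
    have "Kf t1 = Nf t1 (a t1) (indicator B)"
      unfolding Kf_def phi_def
      by (rule Nf_cong[OF S_0T[OF t1S]]) (use Omega_same t00 t1T t01 in auto)
    also have "\<dots> = (\<integral>p. indicator (B \<times> {a t1..<1}) p \<partial>mu t1)"
      unfolding Nf_raw using BW by (intro Bochner_Integration.integral_cong[OF refl]) (auto simp: indicator_def)
    also have "\<dots> = measure (mu t1) (B \<times> {a t1..<1})"
    proof -
      have "B \<times> {a t1..<1} \<inter> space (mu t1) = B \<times> {a t1..<1}"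
        using sets.sets_into_space[OF BI_mu(1)[OF S_0T[OF t1S] B, of "a t1" 1]] S_a[OF t1S] by auto
      then show ?thesis by simp
    qed
    finally show ?thesis .
  qed
  have K0: "Kf t0 = (\<integral>p\<in>B \<times> {y0..<1}. exp (- Omega (fst p) t0 t1) \<partial>mu t0)"
    unfolding Kf_def Nf_def phi_def a_init set_lebesgue_integral_def using BW
    by (intro Bochner_Integration.integral_cong[OF refl]) (auto simp: indicator_def)
  have G: "(\<integral>s\<in>{t0..t1}. Gf s \<partial>lborel) = (\<integral>s\<in>{t0..t1}. (\<integral>x\<in>{a s..<1}. (\<integral>p\<in>B \<times> {a s..<x}. exp (- Omega (fst p) s t1) * dwdy (fst p) x s \<partial>mu s) \<partial>lborel) \<partial>lborel)"
  proof (rule set_lebesgue_integral_cong)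
    show "{t0..t1} \<in> sets lborel" by simp
    show "\<forall>s. s \<in> {t0..t1} \<longrightarrow> Gf s = (\<integral>x\<in>{a s..<1}. (\<integral>p\<in>B \<times> {a s..<x}. exp (- Omega (fst p) s t1) * dwdy (fst p) x s \<partial>mu s) \<partial>lborel)"
    proof (intro allI impI)
      fix s assume "s \<in> {t0..t1}"
      have "(\<integral>p\<in>W \<times> {a s..<x}. phi s (fst p) * dwdy (fst p) x s \<partial>mu s) = (\<integral>p\<in>B \<times> {a s..<x}. exp (- Omega (fst p) s t1) * dwdy (fst p) x s \<partial>mu s)" for x
        unfolding phi_def set_lebesgue_integral_def using BW
        by (intro Bochner_Integration.integral_cong[OF refl]) (auto simp: indicator_def)
      then show "Gf s = (\<integral>x\<in>{a s..<1}. (\<integral>p\<in>B \<times> {a s..<x}. exp (- Omega (fst p) s t1) * dwdy (fst p) x s \<partial>mu s) \<partial>lborel)"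
        unfolding Gf_def Qf_def by simp
    qed
  qed
  show ?thesis using main_ftc K1 K0 G by simp
qed

end

theorem lemma6p1:
  fixes T :: real and W :: "fn set" and lam :: "fn measure"
    and sigma :: "fn \<Rightarrow> real \<Rightarrow> real"
    and yC :: "real \<times> real \<Rightarrow> real \<Rightarrow> real"
    and mu :: "real \<Rightarrow> (fn \<times> real) measure"
  assumes T_pos: "T > 0"
    and W_C1: "\<forall>w\<in>W. C1_rect T w"
    and W_nonneg: "\<forall>w\<in>W. \<forall>y\<in>{0..1}. \<forall>t\<in>{0..T}. w y t \<ge> 0"
    and lam_space: "space lam = W"
    and lam_sets: "sets lam = sets (borel_sup T W)"
    and lam_prob: "prob_space lam"
    and MW_fin: "integrable lam (supnorm T)"
    and CW_fin: "bdd_above (CW_set T W)"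
    and sigma_meas: "(\<lambda>(w, z). sigma w z) \<in> borel_measurable (lam \<Otimes>\<^sub>M I01)"
    and sigma_nonneg: "\<forall>w\<in>W. \<forall>z\<in>{0..1}. sigma w z \<ge> 0"
    and sigma_int_w: "\<forall>y\<in>{0..1}. (\<integral>w. sigma w y \<partial>lam) = 1"
    and sigma_int_z: "\<forall>w\<in>W. (\<integral>z\<in>{0..1}. sigma w z \<partial>lborel) = 1"
    \<comment> \<open>the measures mu_t\<close>
    and mu_sets: "\<forall>t\<in>{0..T}. sets (mu t) = sets (lam \<Otimes>\<^sub>M I01)"
    and mu_prob: "\<forall>t\<in>{0..T}. prob_space (mu t)"
    \<comment> \<open>(1) monotonicity\<close>
    and mono_y0: "\<forall>t\<in>{0..T}. \<forall>a b. 0 \<le> a \<and> a \<le> b \<and> b \<le> 1 \<longrightarrow> yC (a, 0) t \<le> yC (b, 0) t"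
    and mono_t0: "\<forall>t\<in>{0..T}. \<forall>a b. 0 \<le> a \<and> a \<le> b \<and> b \<le> t \<longrightarrow> yC (0, b) t \<le> yC (0, a) t"
    and mono_t: "\<forall>\<gamma> t t'. (\<gamma>, t) \<in> Delta T \<and> t \<le> t' \<and> t' \<le> T \<longrightarrow> yC \<gamma> t \<le> yC \<gamma> t'"
    \<comment> \<open>(2) regularity and surjectivity\<close>
    and yC_range: "\<forall>(\<gamma>, t)\<in>Delta T. yC \<gamma> t \<in> {0..1}"
    and yC_cont: "continuous_on (Delta T) (\<lambda>(\<gamma>, t). yC \<gamma> t)"
    and yC_dt: "\<exists>yCt. continuous_on (Delta T) (\<lambda>(\<gamma>, t). yCt \<gamma> t) \<and>
                  (\<forall>(\<gamma>, t)\<in>Delta T. ((\<lambda>t'. yC \<gamma> t') has_real_derivative yCt \<gamma> t)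
                        (at t within {t'. (\<gamma>, t') \<in> Delta T}))"
    and yC_surj: "\<forall>t\<in>{0..T}. (\<lambda>\<gamma>. yC \<gamma> t) ` Gamma_t t = {0..1}"
    \<comment> \<open>(3) Lipschitz-type bound\<close>
    and lip: "\<forall>h. h \<in> borel_measurable lam \<and> (\<forall>w\<in>W. \<bar>h w\<bar> \<le> 1) \<longrightarrow>
               (\<forall>y\<in>{0..1}. \<forall>t\<in>{0..T}. \<forall>y'\<in>{0..1}. \<forall>t'\<in>{0..T}.
                  \<bar>(\<integral>p\<in>W \<times> {y'..<1}. h (fst p) \<partial>mu t') - (\<integral>p\<in>W \<times> {y..<1}. h (fst p) \<partial>mu t)\<bar>
                    \<le> \<bar>y' - y\<bar> + MW T lam * exp (2 * CW T W * T) * \<bar>t' - t\<bar>)"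
    \<comment> \<open>(4) initial/boundary conditions and the balance equation\<close>
    and yC_init: "\<forall>(y0, t0)\<in>Gamma T. yC (y0, t0) t0 = y0"
    and mu0: "mu 0 = density (lam \<Otimes>\<^sub>M I01) (\<lambda>(w, z). ennreal (sigma w z))"
    and mu_marg: "\<forall>t\<in>{0..T}. \<forall>B\<in>sets lam. measure (mu t) (B \<times> {0..<1}) = measure lam B"
    and mu_tail: "\<forall>t\<in>{0..T}. \<forall>y\<in>{0..1}. measure (mu t) (W \<times> {y..<1}) = 1 - y"
    and balance: "\<forall>y0 t0 t. ((y0, t0), t) \<in> Delta T \<longrightarrow> (\<forall>B\<in>sets lam.
         measure (mu t) (B \<times> {yC (y0, t0) t..<1}) =
           measure (mu t0) (B \<times> {y0..<1})
           - (\<integral>s\<in>{t0..t}. (\<integral>p\<in>B \<times> {yC (y0, t0) s..<1}. fst p (snd p) s \<partial>mu s) \<partial>lborel))"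
  shows "\<forall>y0 t0 t. (y0, t0) \<in> Gamma T \<and> t \<in> {t0..T} \<longrightarrow> (\<forall>B\<in>sets lam.
         measure (mu t) (B \<times> {yC (y0, t0) t..<1}) =
           (\<integral>p\<in>B \<times> {y0..<1}. exp (- Omega (fst p) t0 t) \<partial>mu t0)
           + (\<integral>s\<in>{t0..t}.
                (\<integral>x\<in>{yC (y0, t0) s..<1}.
                   (\<integral>p\<in>B \<times> {yC (y0, t0) s..<x}.
                       exp (- Omega (fst p) s t) * dwdy (fst p) x s \<partial>mu s) \<partial>lborel) \<partial>lborel))"
proof (intro allI impI ballI)
  fix y0 t0 t B assume h: "(y0, t0) \<in> Gamma T \<and> t \<in> {t0..T}" and B: "B \<in> sets lam"
  have bi: "base T W lam mu"
    by (rule base.intro[OF T_pos W_C1 W_nonneg lam_space lam_sets lam_prob MW_fin CW_fin mu_sets mu_prob mu_marg mu_tail lip])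
  have G: "(y0, t0) \<in> Gamma T" and t: "t \<in> {t0..T}" using h by auto
  have y0r: "0 \<le> y0" "y0 \<le> 1" and t0r: "0 \<le> t0" "t0 \<le> T"
    using G T_pos unfolding Gamma_def Gamma_b_def Gamma_i_def by auto
  have D: "((y0, t0), s) \<in> Delta T" if s: "s \<in> {t0..T}" for s
    using G s t0r unfolding Delta_def Gamma_def Gamma_b_def Gamma_i_def Gamma_t_def by auto
  have ti: "traj T W lam mu (\<lambda>s. yC (y0, t0) s) t0 y0"
  proof (rule traj.intro[OF bi], rule traj_axioms.intro)
    show "t0 \<in> {0..T}" using t0r by simp
    show "continuous_on {t0..T} (\<lambda>s. yC (y0, t0) s)"
    proof -
      have "continuous_on {t0..T} (\<lambda>s. (\<lambda>(\<gamma>, t). yC \<gamma> t) ((y0, t0), s))"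
        by (rule continuous_on_compose2[OF yC_cont]) (use D in \<open>auto intro!: continuous_intros\<close>)
      then show ?thesis by simp
    qed
    show "yC (y0, t0) s \<in> {0..1}" if "s \<in> {t0..T}" for s
      using yC_range D[OF that] by auto
    show "yC (y0, t0) t0 = y0" using yC_init G by auto
    show "measure (mu s) (B \<times> {yC (y0, t0) s..<1}) =
       measure (mu t0) (B \<times> {y0..<1}) - (\<integral>s'\<in>{t0..s}. (\<integral>p\<in>B \<times> {yC (y0, t0) s'..<1}. fst p (snd p) s' \<partial>mu s') \<partial>lborel)"
      if "s \<in> {t0..T}" "B \<in> sets lam" for s B
      using balance D[OF that(1)] that(2) by blast
  qed
  have fi: "fin T W lam mu (\<lambda>s. yC (y0, t0) s) t0 y0 t B"
    by (rule fin.intro[OF ti fin_axioms.intro[OF t B]])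
  show "measure (mu t) (B \<times> {yC (y0, t0) t..<1}) =
           (\<integral>p\<in>B \<times> {y0..<1}. exp (- Omega (fst p) t0 t) \<partial>mu t0)
           + (\<integral>s\<in>{t0..t}.
                (\<integral>x\<in>{yC (y0, t0) s..<1}.
                   (\<integral>p\<in>B \<times> {yC (y0, t0) s..<x}.
                       exp (- Omega (fst p) s t) * dwdy (fst p) x s \<partial>mu s) \<partial>lborel) \<partial>lborel)"
    using fin.final[OF fi] by simp
qed

end
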